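(* Let $N\ge1$, $m\ge1$ be integers, let $k_1,k_2,k_3,k$ be integers with $k_1+k_2+k_3=2k$, $0\le k_j\le k\le N$, put $n=mN-k$, and let $g$ be a non-negative integer. Let $\mathbf{P}_m^{(N|k_1,k_2,k_3)}(t_1,\dots,t_n)$ be the symmetric polynomial defined in the context and expand $\prod_{1\le i<j\le n}(t_i-t_j)^{2g}\,\mathbf{P}_m^{(N|k_1,k_2,k_3)}(t_1,\dots,t_n)=\sum_{\nu}C_{\nu_1,\dots,\nu_n}t_1^{\nu_1}\cdots t_n^{\nu_n}.$ If $\nu_1\le\nu_2\le\dots\le\nu_n$ and $C_{\nu_1,\dots,\nu_n}\neq0$, then the following inequalities hold: $\nu_{pN+j}\ge p+(pN+j-1)g$ for $p=0,\dots,m-2$, $j=1,\dots,N-k_1$; $\nu_{pN+j}\ge p+1+(pN+j-1)g$ for $p=0,\dots,m-2$, $j=N-k_1+1,\dots,N$; $\nu_{N(m-1)+j}\ge m-1+((m-1)N+j-1)g$ for $j=1,\dots,N-k$; and $\nu_{pN+j}\le m+p-1+((m+p)N-k+j-2)g$ for $p=0,\dots,m-1$, $j=1,\dots,N-k$; $\nu_{pN+j}\le m+p-1+((m+p)N-k+j-2)g$ for $p=0,\dots,m-2$, $j=N-k+1,\dots,N-k+k_3$; $\nu_{pN+j}\le m+p+((m+p)N-k+j-2)g$ for $p=0,\dots,m-2$, $j=N-k+k_3+1,\dots,N$.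
   Context: Definition: fix a partition of $\{1,\dots,n\}$ into $N$ groups $s_1,\dots,s_N$, where $s_1,\dots,s_k$ have $m-1$ elements each and $s_{k+1},\dots,s_N$ have $m$ elements each. Let $\chi_1=\{s_1,\dots,s_{k-k_1}\}$, $\chi_2=\{s_{k-k_1+1},\dots,s_{k_3}\}$, $\chi_3=\{s_{k_3+1},\dots,s_k\}$. Define $p(x_1,x_2,x_3|t_1,\dots,t_n)=\prod_{q=1}^N\prod_{i<j\in s_q}(t_i-t_j)^2\prod_{j\in\chi_1}(t_j-x_2)(t_j-x_3)\prod_{j\in\chi_2}(t_j-x_1)(t_j-x_3)\prod_{j\in\chi_3}(t_j-x_1)(t_j-x_2)$ ("$j\in\chi_a$" meaning $j$ lies in one of the groups of $\chi_a$), $\Lambda_m=\left[\frac{N^{n}k!(N-k)!}{N!}\right]^{1/2}(m!)^{N-k}((m-1)!)^{k}$, and $\mathbf{P}_m^{(N|k_1,k_2,k_3)}(x_1,x_2,x_3|t)=\Lambda_m^{-1}\sum_{\sigma\in S_n}p(x_1,x_2,x_3|t_{\sigma(1)},\dots,t_{\sigma(n)})$. Then $\mathbf{P}_m^{(N|k_1,k_2,k_3)}(t_1,\dots,t_n)=(-1)^{(m-1)k_1}\lim_{x_3\to\infty}x_3^{-(m-1)k_3}\,\mathbf{P}_m^{(N|k_1,k_2,k_3)}(0,1,x_3|t_1,\dots,t_n)$. *)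

theory Defs
  imports Complex_Main "HOL-Library.Poly_Mapping" "HOL-Combinatorics.Permutations"
begin

type_synonym mpoly = "(nat \<Rightarrow>\<^sub>0 nat) \<Rightarrow>\<^sub>0 real"

definition mvar :: "nat \<Rightarrow> mpoly" where
  "mvar i = Poly_Mapping.single (Poly_Mapping.single i 1) 1"

definition mconst :: "real \<Rightarrow> mpoly" where
  "mconst c = Poly_Mapping.single 0 c"

definition admissible_partition :: "nat \<Rightarrow> nat \<Rightarrow> nat \<Rightarrow> nat \<Rightarrow> (nat \<Rightarrow> nat set) \<Rightarrow> bool" where
  "admissible_partition N m k n s \<longleftrightarrow>
     (\<Union>q\<in>{1..N}. s q) = {1..n} \<and>
     (\<forall>q\<in>{1..N}. \<forall>q'\<in>{1..N}. q \<noteq> q' \<longrightarrow> s q \<inter> s q' = {}) \<and>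
     (\<forall>q\<in>{1..N}. finite (s q) \<and> card (s q) = (if q \<le> k then m - 1 else m))"

definition p_poly :: "nat \<Rightarrow> nat \<Rightarrow> nat \<Rightarrow> nat \<Rightarrow> (nat \<Rightarrow> nat set)
    \<Rightarrow> real \<Rightarrow> real \<Rightarrow> real \<Rightarrow> (nat \<Rightarrow> mpoly) \<Rightarrow> mpoly" where
  "p_poly N k k1 k3 s x1 x2 x3 f =
     (\<Prod>q\<in>{1..N}. \<Prod>(i,j)\<in>{(i,j). i \<in> s q \<and> j \<in> s q \<and> i < j}. (f i - f j)^2) *
     (\<Prod>j\<in>(\<Union>q\<in>{1..k-k1}. s q). (f j - mconst x2) * (f j - mconst x3)) *
     (\<Prod>j\<in>(\<Union>q\<in>{k-k1+1..k3}. s q). (f j - mconst x1) * (f j - mconst x3)) *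
     (\<Prod>j\<in>(\<Union>q\<in>{k3+1..k}. s q). (f j - mconst x1) * (f j - mconst x2))"

definition Lambda_m :: "nat \<Rightarrow> nat \<Rightarrow> nat \<Rightarrow> nat \<Rightarrow> real" where
  "Lambda_m N m k n =
     sqrt (real N ^ n * fact k * fact (N - k) / fact N) * fact m ^ (N - k) * fact (m - 1) ^ k"

definition P3 :: "nat \<Rightarrow> nat \<Rightarrow> nat \<Rightarrow> nat \<Rightarrow> nat \<Rightarrow> nat \<Rightarrow> (nat \<Rightarrow> nat set)
    \<Rightarrow> real \<Rightarrow> real \<Rightarrow> real \<Rightarrow> mpoly" where
  "P3 N m k k1 k3 n s x1 x2 x3 =
     mconst (inverse (Lambda_m N m k n)) *
     (\<Sum>\<sigma>\<in>{\<sigma>. \<sigma> permutes {1..n}}. p_poly N k k1 k3 s x1 x2 x3 (\<lambda>i. mvar (\<sigma> i)))"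

definition P_poly :: "nat \<Rightarrow> nat \<Rightarrow> nat \<Rightarrow> nat \<Rightarrow> nat \<Rightarrow> nat \<Rightarrow> (nat \<Rightarrow> nat set) \<Rightarrow> mpoly" where
  "P_poly N m k k1 k3 n s = Abs_poly_mapping (\<lambda>\<alpha>.
     (-1) ^ ((m - 1) * k1) *
     Lim at_top (\<lambda>x3::real. Poly_Mapping.lookup (P3 N m k k1 k3 n s 0 1 x3) \<alpha> / x3 ^ ((m - 1) * k3)))"

definition vandermonde_sq :: "nat \<Rightarrow> nat \<Rightarrow> mpoly" where
  "vandermonde_sq n g = (\<Prod>(i,j)\<in>{(i,j). 1 \<le> i \<and> i < j \<and> j \<le> n}. (mvar i - mvar j) ^ (2 * g))"

end

theory Submission
  imports Defs "HOL-Computational_Algebra.Polynomial"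
begin

definition degS :: "nat set \<Rightarrow> (nat \<Rightarrow>\<^sub>0 nat) \<Rightarrow> int" where
  "degS S \<alpha> = (\<Sum>v\<in>S. int (Poly_Mapping.lookup \<alpha> v))"

lemma degS_add: "degS S (a + b) = degS S a + degS S b"
  by (simp add: degS_def lookup_add sum.distrib)

lemma degS_zero[simp]: "degS S 0 = 0"
  by (simp add: degS_def)

lemma degS_nonneg: "degS S a \<ge> 0"
  by (simp add: degS_def sum_nonneg)

lemma degS_single: "finite S \<Longrightarrow> degS S (Poly_Mapping.single v 1) = (if v \<in> S then 1 else 0)"
proof -
  have "(\<Sum>w\<in>S. int (Poly_Mapping.lookup (Poly_Mapping.single v 1) w)) = (\<Sum>w\<in>S. if v = w then 1 else 0)"
    by (rule sum.cong) (auto simp: lookup_single when_def)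
  also assume "finite S"
  then have "(\<Sum>w\<in>S. (if v = w then 1 else 0::int)) = (if v \<in> S then 1 else 0)"
    by (simp add: sum.delta)
  finally show ?thesis by (simp add: degS_def)
qed

definition lowM :: "nat set \<Rightarrow> int \<Rightarrow> mpoly \<Rightarrow> bool" where
  "lowM S L f \<longleftrightarrow> (\<forall>\<alpha>\<in>Poly_Mapping.keys f. L \<le> degS S \<alpha>)"
definition highM :: "nat set \<Rightarrow> int \<Rightarrow> mpoly \<Rightarrow> bool" where
  "highM S U f \<longleftrightarrow> (\<forall>\<alpha>\<in>Poly_Mapping.keys f. degS S \<alpha> \<le> U)"

lemma lowM_mult: "lowM S a f \<Longrightarrow> lowM S b g \<Longrightarrow> lowM S (a + b) (f * g)"
  unfolding lowM_def using keys_mult[of f g] by (force simp: degS_add)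
lemma highM_mult: "highM S a f \<Longrightarrow> highM S b g \<Longrightarrow> highM S (a + b) (f * g)"
  unfolding highM_def using keys_mult[of f g] by (force simp: degS_add)

lemma lowM_add: "lowM S a f \<Longrightarrow> lowM S a g \<Longrightarrow> lowM S a (f + g)"
  unfolding lowM_def using keys_add[of f g] by blast
lemma highM_add: "highM S a f \<Longrightarrow> highM S a g \<Longrightarrow> highM S a (f + g)"
  unfolding highM_def using keys_add[of f g] by blast
lemma lowM_diff: "lowM S a f \<Longrightarrow> lowM S a g \<Longrightarrow> lowM S a (f - g)"
  unfolding lowM_def using keys_diff[of f g] by blast
lemma highM_diff: "highM S a f \<Longrightarrow> highM S a g \<Longrightarrow> highM S a (f - g)"
  unfolding highM_def using keys_diff[of f g] by blast
lemma lowM_sum: "(\<And>i. i \<in> I \<Longrightarrow> lowM S a (f i)) \<Longrightarrow> lowM S a (sum f I)"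
  unfolding lowM_def using keys_sum[of f I] by blast
lemma highM_sum: "(\<And>i. i \<in> I \<Longrightarrow> highM S a (f i)) \<Longrightarrow> highM S a (sum f I)"
  unfolding highM_def using keys_sum[of f I] by blast
lemma lowM_mono: "lowM S a f \<Longrightarrow> b \<le> a \<Longrightarrow> lowM S b f"
  unfolding lowM_def by force
lemma highM_mono: "highM S a f \<Longrightarrow> a \<le> b \<Longrightarrow> highM S b f"
  unfolding highM_def by force
lemma lowM_0: "lowM S 0 f"
  unfolding lowM_def using degS_nonneg by blast
lemma lowM_zero[simp]: "lowM S a 0" and highM_zero[simp]: "highM S a 0"
  unfolding lowM_def highM_def by auto
lemma lowM_one: "lowM S 0 1" and highM_one: "highM S 0 1"
  unfolding lowM_def highM_def by auto
lemma lowM_prod: "finite I \<Longrightarrow> (\<And>i. i \<in> I \<Longrightarrow> lowM S (a i) (f i)) \<Longrightarrow> lowM S (\<Sum>i\<in>I. a i) (\<Prod>i\<in>I. f i)"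
  by (induction I rule: finite_induct) (auto simp: lowM_one intro: lowM_mult)
lemma highM_prod: "finite I \<Longrightarrow> (\<And>i. i \<in> I \<Longrightarrow> highM S (a i) (f i)) \<Longrightarrow> highM S (\<Sum>i\<in>I. a i) (\<Prod>i\<in>I. f i)"
  by (induction I rule: finite_induct) (auto simp: highM_one intro: highM_mult)
lemma lowM_power: "lowM S a f \<Longrightarrow> lowM S (int n * a) (f ^ n)"
  by (induction n) (auto simp: lowM_one algebra_simps dest: lowM_mult)
lemma highM_power: "highM S a f \<Longrightarrow> highM S (int n * a) (f ^ n)"
  by (induction n) (auto simp: highM_one algebra_simps dest: highM_mult)

lemma keys_mconst: "Poly_Mapping.keys (mconst c) \<subseteq> {0}"
  by (simp add: mconst_def)
lemma lowM_mconst: "lowM S 0 (mconst c)" and highM_mconst: "highM S 0 (mconst c)"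
  unfolding lowM_def highM_def using keys_mconst[of c] by auto
lemma lowM_mvar: "finite S \<Longrightarrow> lowM S (if v \<in> S then 1 else 0) (mvar v)"
  and highM_mvar: "finite S \<Longrightarrow> highM S (if v \<in> S then 1 else 0) (mvar v)"
  unfolding lowM_def highM_def mvar_def using degS_single[of S v] by auto

lemma lowM_cmult: "lowM S a f \<Longrightarrow> lowM S a (mconst c * f)"
  using lowM_mult[OF lowM_mconst] by fastforce
lemma highM_cmult: "highM S a f \<Longrightarrow> highM S a (mconst c * f)"
  using highM_mult[OF highM_mconst] by fastforce

definition lowP :: "int \<Rightarrow> nat set \<Rightarrow> int \<Rightarrow> mpoly poly \<Rightarrow> bool" where
  "lowP c S L Q \<longleftrightarrow> (\<forall>e. lowM S (L - c * int e) (coeff Q e))"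
definition highP :: "int \<Rightarrow> nat set \<Rightarrow> int \<Rightarrow> mpoly poly \<Rightarrow> bool" where
  "highP c S U Q \<longleftrightarrow> (\<forall>e. highM S (U - c * int e) (coeff Q e))"

lemma lowP_mult: assumes "lowP c S a P" "lowP c S b Q" shows "lowP c S (a + b) (P * Q)"
  unfolding lowP_def coeff_mult
proof (intro allI lowM_sum)
  fix e i :: nat assume "i \<in> {..e}"
  then have "a + b - c * int e = (a - c * int i) + (b - c * int (e - i))"
    by (simp add: of_nat_diff algebra_simps)
  then show "lowM S (a + b - c * int e) (coeff P i * coeff Q (e - i))"
    using assms lowM_mult unfolding lowP_def by metis
qed
lemma highP_mult: assumes "highP c S a P" "highP c S b Q" shows "highP c S (a + b) (P * Q)"
  unfolding highP_def coeff_mult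
proof (intro allI highM_sum)
  fix e i :: nat assume "i \<in> {..e}"
  then have "a + b - c * int e = (a - c * int i) + (b - c * int (e - i))"
    by (simp add: of_nat_diff algebra_simps)
  then show "highM S (a + b - c * int e) (coeff P i * coeff Q (e - i))"
    using assms highM_mult unfolding highP_def by metis
qed

lemma lowP_diff: "lowP c S a P \<Longrightarrow> lowP c S a Q \<Longrightarrow> lowP c S a (P - Q)"
  unfolding lowP_def by (simp add: lowM_diff)
lemma highP_diff: "highP c S a P \<Longrightarrow> highP c S a Q \<Longrightarrow> highP c S a (P - Q)"
  unfolding highP_def by (simp add: highM_diff)
lemma lowP_sum: "(\<And>i. i \<in> I \<Longrightarrow> lowP c S a (f i)) \<Longrightarrow> lowP c S a (sum f I)"
  unfolding lowP_def coeff_sum by (simp add: lowM_sum)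
lemma highP_sum: "(\<And>i. i \<in> I \<Longrightarrow> highP c S a (f i)) \<Longrightarrow> highP c S a (sum f I)"
  unfolding highP_def coeff_sum by (simp add: highM_sum)
lemma lowP_mono: "lowP c S a f \<Longrightarrow> b \<le> a \<Longrightarrow> lowP c S b f"
  unfolding lowP_def using lowM_mono by (metis diff_right_mono)
lemma highP_mono: "highP c S a f \<Longrightarrow> a \<le> b \<Longrightarrow> highP c S b f"
  unfolding highP_def using highM_mono by (metis diff_right_mono)
lemma lowP_one: "lowP c S 0 1" and highP_one: "highP c S 0 1"
  unfolding lowP_def highP_def by (auto simp: coeff_1 lowM_one highM_one)
lemma lowP_prod: "finite I \<Longrightarrow> (\<And>i. i \<in> I \<Longrightarrow> lowP c S (a i) (f i)) \<Longrightarrow> lowP c S (\<Sum>i\<in>I. a i) (\<Prod>i\<in>I. f i)"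
  by (induction I rule: finite_induct) (auto simp: lowP_one intro: lowP_mult)
lemma highP_prod: "finite I \<Longrightarrow> (\<And>i. i \<in> I \<Longrightarrow> highP c S (a i) (f i)) \<Longrightarrow> highP c S (\<Sum>i\<in>I. a i) (\<Prod>i\<in>I. f i)"
  by (induction I rule: finite_induct) (auto simp: highP_one intro: highP_mult)

lemma lowP_const: "lowM S a f \<Longrightarrow> lowP c S a [:f:]"
  unfolding lowP_def by (auto simp: coeff_pCons split: nat.split)
lemma highP_const: "highM S a f \<Longrightarrow> highP c S a [:f:]"
  unfolding highP_def by (auto simp: coeff_pCons split: nat.split)
lemma lowP0: "lowP 0 S 0 Q"
  unfolding lowP_def by (simp add: lowM_0)
lemma highP_X: "highP 1 S 1 [:0, 1:]"
  unfolding highP_def by (auto simp: coeff_pCons highM_one split: nat.split)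

definition pg :: "nat \<Rightarrow> nat \<Rightarrow> nat \<Rightarrow> nat \<Rightarrow> (nat \<Rightarrow> nat set) \<Rightarrow> (nat \<Rightarrow> mpoly) \<Rightarrow> mpoly poly" where
  "pg N k k1 k3 s f =
     (\<Prod>q\<in>{1..N}. \<Prod>(i,j)\<in>{(i,j). i \<in> s q \<and> j \<in> s q \<and> i < j}. [:(f i - f j)^2:]) *
     (\<Prod>j\<in>(\<Union>q\<in>{1..k-k1}. s q). [:f j - mconst 1:] * ([:f j:] - [:0, 1:])) *
     (\<Prod>j\<in>(\<Union>q\<in>{k-k1+1..k3}. s q). [:f j - mconst 0:] * ([:f j:] - [:0, 1:])) *
     (\<Prod>j\<in>(\<Union>q\<in>{k3+1..k}. s q). [:f j - mconst 0:] * [:f j - mconst 1:])"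

lemma poly_pg: "poly (pg N k k1 k3 s f) (mconst x3) = p_poly N k k1 k3 s 0 1 x3 f"
proof -
  have pc: "poly [:a:] y = a" and pX: "poly [:0, 1:] y = y" for a y :: mpoly by simp_all
  show ?thesis unfolding pg_def p_poly_def
    by (simp only: poly_prod poly_mult poly_diff pc pX case_prod_unfold poly_power)
qed

definition Qg :: "nat \<Rightarrow> nat \<Rightarrow> nat \<Rightarrow> nat \<Rightarrow> nat \<Rightarrow> nat \<Rightarrow> (nat \<Rightarrow> nat set) \<Rightarrow> mpoly poly" where
  "Qg N m k k1 k3 n s = [:mconst (inverse (Lambda_m N m k n)):] *
     (\<Sum>\<sigma>\<in>{\<sigma>. \<sigma> permutes {1..n}}. pg N k k1 k3 s (\<lambda>i. mvar (\<sigma> i)))"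

lemma poly_Qg: "poly (Qg N m k k1 k3 n s) (mconst x3) = P3 N m k k1 k3 n s 0 1 x3"
  unfolding Qg_def P3_def by (simp add: poly_sum poly_pg)

lemma degree_prod_le: "(\<And>x. x \<in> A \<Longrightarrow> degree (f x) \<le> d) \<Longrightarrow> degree (prod f A) \<le> d * card A"
proof (cases "finite A")
  case True
  assume h: "\<And>x. x \<in> A \<Longrightarrow> degree (f x) \<le> d"
  have "degree (prod f A) \<le> sum (degree \<circ> f) A" by (rule degree_prod_sum_le[OF True])
  also have "\<dots> \<le> sum (\<lambda>_. d) A" by (rule sum_mono) (simp add: h)
  finally show ?thesis by (simp add: mult.commute)
qed simp

lemma degree_pg: "degree (pg N k k1 k3 s f) \<le> card (\<Union>q\<in>{1..k-k1}. s q) + card (\<Union>q\<in>{k-k1+1..k3}. s q)"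
proof -
  have d1: "degree (\<Prod>q\<in>{1..N}. \<Prod>(i,j)\<in>{(i,j). i \<in> s q \<and> j \<in> s q \<and> i < j}. [:(f i - f j)^2:]) \<le> 0 * card {1..N}"
    by (rule degree_prod_le, rule order.trans[OF degree_prod_le]) (auto simp: case_prod_unfold)
  have fac: "degree ([:a:] * ([:b:] - [:0, 1:])) \<le> 1" for a b :: mpoly
    by (rule order.trans[OF degree_mult_le]) (simp add: order.trans[OF degree_diff_le])
  have d2: "degree (\<Prod>j\<in>(\<Union>q\<in>{1..k-k1}. s q). [:f j - mconst 1:] * ([:f j:] - [:0, 1:])) \<le> 1 * card (\<Union>q\<in>{1..k-k1}. s q)"
    by (rule degree_prod_le) (rule fac)
  have d3: "degree (\<Prod>j\<in>(\<Union>q\<in>{k-k1+1..k3}. s q). [:f j - mconst 0:] * ([:f j:] - [:0, 1:])) \<le> 1 * card (\<Union>q\<in>{k-k1+1..k3}. s q)"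
    by (rule degree_prod_le) (rule fac)
  have d4: "degree (\<Prod>j\<in>(\<Union>q\<in>{k3+1..k}. s q). [:f j - mconst 0:] * [:f j - mconst 1:]) \<le> 0 * card (\<Union>q\<in>{k3+1..k}. s q)"
    by (rule degree_prod_le) (simp add: order.trans[OF degree_mult_le])
  have deg4: "degree (P1*P2*P3*P4) \<le> degree P1 + degree P2 + degree P3 + degree P4" for P1 P2 P3 P4 :: "mpoly poly"
    by (meson add_mono degree_mult_le order_trans order_refl)
  show ?thesis unfolding pg_def
    by (rule order.trans[OF deg4]) (use d1 d2 d3 d4 in linarith)
qed

lemma mconst_mult: "mconst a * mconst b = mconst (a * b)"
  by (simp add: mconst_def mult_single)
lemma mconst_power: "mconst a ^ n = mconst (a ^ n)"
  by (induction n) (auto simp: mconst_mult, simp add: mconst_def)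
lemma lookup_mconst_mult: "Poly_Mapping.lookup (mconst c * f) \<alpha> = c * Poly_Mapping.lookup f \<alpha>"
  unfolding mconst_def mult_map_scale_conv_mult[symmetric]
  by transfer (simp add: when_def)

lemma lookup_poly_mconst:
  assumes "degree Q \<le> D"
  shows "Poly_Mapping.lookup (poly Q (mconst x)) \<alpha> = (\<Sum>e\<le>D. Poly_Mapping.lookup (coeff Q e) \<alpha> * x ^ e)"
proof -
  have "poly Q (mconst x) = (\<Sum>i\<le>degree Q. coeff Q i * mconst x ^ i)" by (rule poly_altdef)
  also have "\<dots> = (\<Sum>i\<le>D. coeff Q i * mconst x ^ i)"
    by (rule sum.mono_neutral_left) (use assms in \<open>auto simp: coeff_eq_0\<close>)
  finally show ?thesis
    by (simp add: lookup_sum mconst_power mult.commute[of _ "mconst _"] lookup_mconst_mult, simp add: mult.commute)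
qed

lemma lim_coeff:
  fixes Q :: "mpoly poly"
  assumes "degree Q \<le> D"
  shows "((\<lambda>x::real. Poly_Mapping.lookup (poly Q (mconst x)) \<alpha> / x ^ D) \<longlongrightarrow> Poly_Mapping.lookup (coeff Q D) \<alpha>) at_top"
proof -
  let ?a = "\<lambda>e. Poly_Mapping.lookup (coeff Q e) \<alpha>"
  have ev: "\<forall>\<^sub>F x in at_top. ?a D + (\<Sum>e<D. ?a e * inverse x ^ (D - e)) = Poly_Mapping.lookup (poly Q (mconst x)) \<alpha> / x ^ D"
    using eventually_gt_at_top[of "0::real"]
  proof eventually_elim
    case (elim x)
    have "Poly_Mapping.lookup (poly Q (mconst x)) \<alpha> / x ^ D = (\<Sum>e\<le>D. ?a e * x ^ e / x ^ D)"
      by (simp add: lookup_poly_mconst[OF assms] sum_divide_distrib)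
    also have "\<dots> = (\<Sum>e\<in>insert D {..<D}. ?a e * x ^ e / x ^ D)"
      by (rule sum.cong) auto
    also have "\<dots> = ?a D + (\<Sum>e<D. ?a e * x ^ e / x ^ D)"
      using elim by simp
    also have "(\<Sum>e<D. ?a e * x ^ e / x ^ D) = (\<Sum>e<D. ?a e * inverse x ^ (D - e))"
    proof (rule sum.cong)
      fix e assume "e \<in> {..<D}"
      then have "x ^ D = x ^ e * x ^ (D - e)" by (simp add: power_add[symmetric])
      then show "?a e * x ^ e / x ^ D = ?a e * inverse x ^ (D - e)"
        using elim by (simp add: power_inverse divide_inverse)
    qed simp
    finally show ?case by simp
  qed
  have "((\<lambda>x::real. ?a D + (\<Sum>e<D. ?a e * inverse x ^ (D - e))) \<longlongrightarrow> ?a D + (\<Sum>e<D. ?a e * 0 ^ (D - e))) at_top"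
    by (intro tendsto_intros tendsto_inverse_0_at_top[OF filterlim_ident])
  moreover have "(\<Sum>e<D. ?a e * 0 ^ (D - e)) = 0"
    by (rule sum.neutral) auto
  ultimately have "((\<lambda>x::real. ?a D + (\<Sum>e<D. ?a e * inverse x ^ (D - e))) \<longlongrightarrow> ?a D) at_top"
    by simp
  then show ?thesis using tendsto_cong[OF ev] by simp
qed

lemma adm_card: "admissible_partition N m k n s \<Longrightarrow> q \<in> {1..N} \<Longrightarrow> finite (s q) \<and> card (s q) = (if q \<le> k then m - 1 else m)"
  unfolding admissible_partition_def by blast

lemma card_UN_groups:
  assumes "admissible_partition N m k n s" "b \<le> k" "k \<le> N" "1 \<le> a"
  shows "card (\<Union>q\<in>{a..b}. s q) \<le> (b + 1 - a) * (m - 1)"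
proof -
  have "card (\<Union>q\<in>{a..b}. s q) \<le> (\<Sum>q\<in>{a..b}. card (s q))" by (rule card_UN_le) simp
  also have "\<dots> = (\<Sum>q\<in>{a..b}. m - 1)"
    by (rule sum.cong) (use assms adm_card in auto)
  finally show ?thesis by simp
qed

lemma degree_Qg:
  assumes "admissible_partition N m k n s" "k1 \<le> k" "k3 \<le> k" "k \<le> N" "k - k1 \<le> k3"
  shows "degree (Qg N m k k1 k3 n s) \<le> (m - 1) * k3"
proof -
  have "degree (pg N k k1 k3 s f) \<le> (m - 1) * k3" for f
  proof -
    have "card (\<Union>q\<in>{1..k-k1}. s q) \<le> (k - k1 + 1 - 1) * (m - 1)"
      using card_UN_groups[of N m k n s "k-k1" 1] assms by auto
    moreover have "card (\<Union>q\<in>{k-k1+1..k3}. s q) \<le> (k3 + 1 - (k - k1 + 1)) * (m - 1)"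
      using card_UN_groups[of N m k n s k3 "k-k1+1"] assms by auto
    moreover have "(k - k1 + 1 - 1) * (m - 1) + (k3 + 1 - (k - k1 + 1)) * (m - 1) = (m - 1) * k3"
    proof -
      have "k - k1 + 1 - 1 + (k3 + 1 - (k - k1 + 1)) = k3" using assms(5) by simp
      then show ?thesis by (metis add_mult_distrib mult.commute)
    qed
    ultimately show ?thesis using degree_pg[of N k k1 k3 s f] by linarith
  qed
  then have "degree (\<Sum>\<sigma>\<in>{\<sigma>. \<sigma> permutes {1..n}}. pg N k k1 k3 s (\<lambda>i. mvar (\<sigma> i))) \<le> (m - 1) * k3"
    by (intro degree_sum_le finite_permutations) auto
  then show ?thesis unfolding Qg_def
    using degree_mult_le[of "[:mconst (inverse (Lambda_m N m k n)):]" "\<Sum>\<sigma>\<in>{\<sigma>. \<sigma> permutes {1..n}}. pg N k k1 k3 s (\<lambda>i. mvar (\<sigma> i))"]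
    by simp
qed

lemma keys_P_poly:
  assumes "admissible_partition N m k n s" "k1 \<le> k" "k3 \<le> k" "k \<le> N" "k - k1 \<le> k3"
  shows "Poly_Mapping.keys (P_poly N m k k1 k3 n s) \<subseteq> Poly_Mapping.keys (coeff (Qg N m k k1 k3 n s) ((m - 1) * k3))"
proof -
  let ?Q = "Qg N m k k1 k3 n s" and ?D = "(m - 1) * k3"
  have L: "Lim at_top (\<lambda>x3::real. Poly_Mapping.lookup (P3 N m k k1 k3 n s 0 1 x3) \<alpha> / x3 ^ ?D)
      = Poly_Mapping.lookup (coeff ?Q ?D) \<alpha>" for \<alpha>
    using lim_coeff[OF degree_Qg[OF assms], of \<alpha>] unfolding poly_Qg
    by (intro tendsto_Lim) simp_all
  have "P_poly N m k k1 k3 n s = Abs_poly_mapping (Poly_Mapping.lookup (mconst ((-1) ^ ((m - 1) * k1)) * coeff ?Q ?D))"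
    unfolding P_poly_def L lookup_mconst_mult by simp
  also have "\<dots> = mconst ((-1) ^ ((m - 1) * k1)) * coeff ?Q ?D"
    by (rule lookup_inverse)
  finally show ?thesis
    by (auto simp: in_keys_iff lookup_mconst_mult)
qed

definition pairs :: "nat set \<Rightarrow> (nat \<times> nat) set" where
  "pairs A = {(a,b). a \<in> A \<and> b \<in> A \<and> a < b}"

lemma finite_pairs: "finite A \<Longrightarrow> finite (pairs A)"
  by (rule finite_subset[of _ "A \<times> A"]) (auto simp: pairs_def)

lemma card_pairs: assumes "finite A" shows "2 * card (pairs A) = card A * (card A - 1)"
proof -
  define Off where "Off = {(a,b). a \<in> A \<and> b \<in> A \<and> a \<noteq> b}"
  define Dg where "Dg = (\<lambda>a. (a,a)) ` A"
  have fAA: "finite (A \<times> A)" using assms by simp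
  have fOff: "finite Off" by (rule finite_subset[OF _ fAA]) (auto simp: Off_def)
  have fD: "finite Dg" unfolding Dg_def using assms by simp
  have u1: "A \<times> A = Dg \<union> Off" unfolding Dg_def Off_def by auto
  have d1: "Dg \<inter> Off = {}" unfolding Dg_def Off_def by auto
  have "card (A \<times> A) = card Dg + card Off" unfolding u1 by (rule card_Un_disjoint[OF fD fOff d1])
  moreover have "card Dg = card A" unfolding Dg_def by (rule card_image) (auto simp: inj_on_def)
  ultimately have cO: "card Off = card A * card A - card A" by (simp add: card_cartesian_product)
  have u2: "Off = pairs A \<union> prod.swap ` pairs A"
  proof
    show "Off \<subseteq> pairs A \<union> prod.swap ` pairs A"
    proof
      fix x assume "x \<in> Off"
      then obtain a b where x: "x = (a,b)" "a \<in> A" "b \<in> A" "a \<noteq> b" unfolding Off_def by auto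
      show "x \<in> pairs A \<union> prod.swap ` pairs A"
      proof (cases "a < b")
        case True then show ?thesis using x by (auto simp: pairs_def)
      next
        case False
        then have "(b,a) \<in> pairs A" using x by (auto simp: pairs_def)
        then have "prod.swap (b,a) \<in> prod.swap ` pairs A" by (rule imageI)
        then show ?thesis using x by simp
      qed
    qed
    show "pairs A \<union> prod.swap ` pairs A \<subseteq> Off" unfolding Off_def pairs_def by auto
  qed
  have d2: "pairs A \<inter> prod.swap ` pairs A = {}" unfolding pairs_def by auto
  have cs: "card (prod.swap ` pairs A) = card (pairs A)" by (rule card_image) (auto simp: inj_on_def prod.swap_def)
  have "card Off = card (pairs A) + card (prod.swap ` pairs A)"
    unfolding u2 by (rule card_Un_disjoint[OF finite_pairs[OF assms] finite_imageI[OF finite_pairs[OF assms]] d2])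
  with cO cs show ?thesis by (simp add: diff_mult_distrib2)
qed

lemma card_pairs_int: "finite A \<Longrightarrow> 2 * int (card (pairs A)) = int (card A) * (int (card A) - 1)"
proof -
  assume "finite A"
  then have "int (2 * card (pairs A)) = int (card A * (card A - 1))" by (simp add: card_pairs)
  then show ?thesis by (cases "card A") (auto simp: algebra_simps)
qed

lemma sum_if_const: "finite A \<Longrightarrow> (\<Sum>x\<in>A. if P x then c else 0) = c * int (card {x\<in>A. P x})"
  by (simp add: sum.inter_filter[symmetric])

lemma lowM_diff_sq: "finite S \<Longrightarrow> lowM S (if a \<in> S \<and> b \<in> S then int r else 0) ((mvar a - mvar b) ^ r)"
proof (cases "a \<in> S \<and> b \<in> S")
  case True
  assume "finite S"
  then have "lowM S 1 (mvar a - mvar b)" using lowM_mvar[of S a] lowM_mvar[of S b] True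
    by (auto intro: lowM_diff)
  then show ?thesis using True lowM_power[of S 1 _ r] by auto
next
  case False
  then have "(if a \<in> S \<and> b \<in> S then int r else 0) = 0" by (rule if_not_P)
  then show ?thesis by (simp only:) (rule lowM_0)
qed

lemma highM_diff_sq: "finite S \<Longrightarrow> highM S (if a \<in> S \<or> b \<in> S then int r else 0) ((mvar a - mvar b) ^ r)"
proof -
  assume fS: "finite S"
  have "highM S (if a \<in> S \<or> b \<in> S then 1 else 0) (mvar a - mvar b)"
    using highM_mvar[OF fS, of a] highM_mvar[OF fS, of b]
    by (intro highM_diff) (auto elim: highM_mono split: if_splits)
  then show ?thesis
  proof (cases "a \<in> S \<or> b \<in> S")
    case True
    with \<open>highM S (if a \<in> S \<or> b \<in> S then 1 else 0) (mvar a - mvar b)\<close>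
    have "highM S 1 (mvar a - mvar b)" by simp
    from highM_power[OF this, of r] True show ?thesis by simp
  next
    case False
    with \<open>highM S (if a \<in> S \<or> b \<in> S then 1 else 0) (mvar a - mvar b)\<close>
    have "highM S 0 (mvar a - mvar b)" by simp
    from highM_power[OF this, of r] False show ?thesis by simp
  qed
qed

lemma lowV:
  assumes "i \<le> n"
  shows "lowM {1..i} (int g * int i * (int i - 1)) (vandermonde_sq n g)"
proof -
  let ?S = "{1..i}"
  have "lowM ?S (\<Sum>x\<in>pairs {1..n}. if fst x \<in> ?S \<and> snd x \<in> ?S then int (2*g) else 0)
        (\<Prod>x\<in>pairs {1..n}. (mvar (fst x) - mvar (snd x)) ^ (2 * g))"
    by (intro lowM_prod finite_pairs lowM_diff_sq) auto
  moreover have "(\<Prod>x\<in>pairs {1..n}. (mvar (fst x) - mvar (snd x)) ^ (2 * g)) = vandermonde_sq n g"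
    unfolding vandermonde_sq_def pairs_def
    by (rule prod.cong) (auto simp: case_prod_unfold)
  moreover have se: "{x \<in> pairs {1..n}. fst x \<in> ?S \<and> snd x \<in> ?S} = pairs ?S"
    using assms by (auto simp: pairs_def)
  moreover have c2: "2 * int (card (pairs ?S)) = int i * (int i - 1)"
    using card_pairs_int[of ?S] by simp
  moreover have "(\<Sum>x\<in>pairs {1..n}. if fst x \<in> ?S \<and> snd x \<in> ?S then int (2*g) else 0) = int g * int i * (int i - 1)"
  proof -
    have "(\<Sum>x\<in>pairs {1..n}. if fst x \<in> ?S \<and> snd x \<in> ?S then int (2*g) else 0)
        = int (2*g) * int (card {x \<in> pairs {1..n}. fst x \<in> ?S \<and> snd x \<in> ?S})"
      by (rule sum_if_const) (simp add: finite_pairs)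
    also have "\<dots> = int g * (2 * int (card (pairs ?S)))" unfolding se by simp
    also have "\<dots> = int g * int i * (int i - 1)" unfolding c2 by simp
    finally show ?thesis .
  qed
  ultimately show ?thesis by simp
qed

lemma highV:
  assumes "1 \<le> i" "i \<le> n"
  shows "highM {i..n} (int g * (int n - int i + 1) * (int n + int i - 2)) (vandermonde_sq n g)"
proof -
  let ?T = "{i..n}"
  have "highM ?T (\<Sum>x\<in>pairs {1..n}. if fst x \<in> ?T \<or> snd x \<in> ?T then int (2*g) else 0)
        (\<Prod>x\<in>pairs {1..n}. (mvar (fst x) - mvar (snd x)) ^ (2 * g))"
    by (intro highM_prod finite_pairs highM_diff_sq) auto
  moreover have "(\<Prod>x\<in>pairs {1..n}. (mvar (fst x) - mvar (snd x)) ^ (2 * g)) = vandermonde_sq n g"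
    unfolding vandermonde_sq_def pairs_def
    by (rule prod.cong) (auto simp: case_prod_unfold)
  moreover have Cd: "card {x \<in> pairs {1..n}. fst x \<in> ?T \<or> snd x \<in> ?T} = card (pairs {1..n}) - card (pairs {1..i-1})"
  proof -
    have "pairs {1..n} = {x \<in> pairs {1..n}. fst x \<in> ?T \<or> snd x \<in> ?T} \<union> pairs {1..i-1}"
    proof (intro equalityI subsetI)
      fix x assume x: "x \<in> pairs {1..n}"
      obtain a b where ab: "x = (a,b)" by (cases x)
      show "x \<in> {x \<in> pairs {1..n}. fst x \<in> {i..n} \<or> snd x \<in> {i..n}} \<union> pairs {1..i-1}"
      proof (cases "b \<ge> i")
        case True then show ?thesis using x ab by (simp add: pairs_def)
      next
        case False then show ?thesis using x ab by (auto simp: pairs_def)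
      qed
    next
      fix x assume "x \<in> {x \<in> pairs {1..n}. fst x \<in> {i..n} \<or> snd x \<in> {i..n}} \<union> pairs {1..i-1}"
      then show "x \<in> pairs {1..n}" using assms by (auto simp: pairs_def)
    qed
    moreover have "{x \<in> pairs {1..n}. fst x \<in> ?T \<or> snd x \<in> ?T} \<inter> pairs {1..i-1} = {}"
      by (auto simp: pairs_def)
    moreover have "finite {x \<in> pairs {1..n}. fst x \<in> ?T \<or> snd x \<in> ?T}"
      using finite_pairs[of "{1..n}"] by simp
    ultimately have "card ({x \<in> pairs {1..n}. fst x \<in> ?T \<or> snd x \<in> ?T} \<union> pairs {1..i-1}) = card {x \<in> pairs {1..n}. fst x \<in> ?T \<or> snd x \<in> ?T} + card (pairs {1..i-1})"
      using card_Un_disjoint[OF _ finite_pairs[OF finite_atLeastAtMost[of 1 "i-1"]]] by blast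
    with \<open>pairs {1..n} = _\<close> have "card (pairs {1..n}) = card {x \<in> pairs {1..n}. fst x \<in> ?T \<or> snd x \<in> ?T} + card (pairs {1..i-1})"
      by (simp only: flip: \<open>pairs {1..n} = _\<close>)
    then show ?thesis by simp
  qed
  moreover have Cm: "card (pairs {1..i-1}) \<le> card (pairs {1..n})"
    by (rule card_mono, rule finite_pairs, simp) (use assms in \<open>auto simp: pairs_def\<close>)
  moreover have cn: "2 * int (card (pairs {1..n})) = int n * (int n - 1)"
    using card_pairs_int[of "{1..n}"] by simp
  moreover have ci: "2 * int (card (pairs {1..i-1})) = (int i - 1) * (int i - 2)"
  proof -
    have "2 * int (card (pairs {1..i-1})) = int (card {1..i-1}) * (int (card {1..i-1}) - 1)"
      by (rule card_pairs_int) simp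
    moreover have "int (card {1..i-1}) = int i - 1" using assms by simp
    ultimately show ?thesis by simp
  qed
  moreover have "(\<Sum>x\<in>pairs {1..n}. if fst x \<in> ?T \<or> snd x \<in> ?T then int (2*g) else 0)
     = int g * (int n - int i + 1) * (int n + int i - 2)"
  proof -
    have "(\<Sum>x\<in>pairs {1..n}. if fst x \<in> ?T \<or> snd x \<in> ?T then int (2*g) else 0)
       = int (2*g) * int (card {x \<in> pairs {1..n}. fst x \<in> ?T \<or> snd x \<in> ?T})"
      by (rule sum_if_const) (simp add: finite_pairs)
    also have "\<dots> = int g * (2 * int (card (pairs {1..n})) - 2 * int (card (pairs {1..i-1})))"
      unfolding Cd using Cm by (simp add: of_nat_diff right_diff_distrib)
    also have "\<dots> = int g * (int n * (int n - 1) - (int i - 1) * (int i - 2))"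
      unfolding cn ci ..
    also have "\<dots> = int g * (int n - int i + 1) * (int n + int i - 2)"
      by (simp add: algebra_simps)
    finally show ?thesis .
  qed
  ultimately show ?thesis by simp
qed

definition cnt :: "(nat \<Rightarrow> nat) \<Rightarrow> nat set \<Rightarrow> nat set \<Rightarrow> int" where
  "cnt \<sigma> S A = int (card {a\<in>A. \<sigma> a \<in> S})"

lemma sum_group_union:
  assumes adm: "admissible_partition N m k n s" and "b \<le> N" "1 \<le> a"
  shows "(\<Sum>j\<in>(\<Union>q\<in>{a..b}. s q). h j) = (\<Sum>q\<in>{a..b}. \<Sum>j\<in>s q. h j)"
proof (rule sum.UNION_disjoint)
  show "\<forall>q\<in>{a..b}. finite (s q)" using adm_card[OF adm] assms by auto
  show "\<forall>i\<in>{a..b}. \<forall>j\<in>{a..b}. i \<noteq> j \<longrightarrow> s i \<inter> s j = {}"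
    using adm assms unfolding admissible_partition_def by auto
qed simp

lemma finite_group_union:
  assumes adm: "admissible_partition N m k n s" and "b \<le> N" "1 \<le> a"
  shows "finite (\<Union>q\<in>{a..b}. s q)"
  using adm_card[OF adm] assms by auto

lemma sum_cnt: "finite A \<Longrightarrow> (\<Sum>j\<in>A. if \<sigma> j \<in> S then 1 else 0) = cnt \<sigma> S A"
  by (simp add: sum_if_const cnt_def)

lemma pair_sum_low:
  assumes "finite A"
  shows "(\<Sum>x\<in>pairs A. if \<sigma> (fst x) \<in> S \<and> \<sigma> (snd x) \<in> S then 2 else 0) = cnt \<sigma> S A * (cnt \<sigma> S A - 1)"
proof -
  have "(\<Sum>x\<in>pairs A. if \<sigma> (fst x) \<in> S \<and> \<sigma> (snd x) \<in> S then 2 else 0)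
     = 2 * int (card {x\<in>pairs A. \<sigma> (fst x) \<in> S \<and> \<sigma> (snd x) \<in> S})"
    by (rule sum_if_const) (simp add: finite_pairs assms)
  also have "{x\<in>pairs A. \<sigma> (fst x) \<in> S \<and> \<sigma> (snd x) \<in> S} = pairs {a\<in>A. \<sigma> a \<in> S}"
    by (auto simp: pairs_def)
  also have "2 * int (card (pairs {a\<in>A. \<sigma> a \<in> S})) = cnt \<sigma> S A * (cnt \<sigma> S A - 1)"
    unfolding cnt_def by (rule card_pairs_int) (simp add: assms)
  finally show ?thesis .
qed

lemma pair_sum_high:
  assumes "finite A"
  shows "(\<Sum>x\<in>pairs A. if \<sigma> (fst x) \<in> T \<or> \<sigma> (snd x) \<in> T then 2 else 0)
     = int (card A) * (int (card A) - 1) - (int (card A) - cnt \<sigma> T A) * (int (card A) - cnt \<sigma> T A - 1)"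
proof -
  let ?B = "{a\<in>A. \<sigma> a \<notin> T}"
  have fB: "finite ?B" using assms by simp
  have "(\<Sum>x\<in>pairs A. if \<sigma> (fst x) \<in> T \<or> \<sigma> (snd x) \<in> T then 2 else 0)
     = 2 * int (card {x\<in>pairs A. \<sigma> (fst x) \<in> T \<or> \<sigma> (snd x) \<in> T})"
    by (rule sum_if_const) (simp add: finite_pairs assms)
  also have "{x\<in>pairs A. \<sigma> (fst x) \<in> T \<or> \<sigma> (snd x) \<in> T} = pairs A - pairs ?B"
    by (auto simp: pairs_def)
  also have "card (pairs A - pairs ?B) = card (pairs A) - card (pairs ?B)"
    by (rule card_Diff_subset, rule finite_pairs[OF fB]) (auto simp: pairs_def)
  also have "card (pairs ?B) \<le> card (pairs A)"
    by (rule card_mono, rule finite_pairs[OF assms]) (auto simp: pairs_def)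
  then have "2 * int (card (pairs A) - card (pairs ?B)) = 2 * int (card (pairs A)) - 2 * int (card (pairs ?B))"
    by (simp add: of_nat_diff)
  also have "2 * int (card (pairs A)) = int (card A) * (int (card A) - 1)"
    by (rule card_pairs_int[OF assms])
  also have "2 * int (card (pairs ?B)) = int (card ?B) * (int (card ?B) - 1)"
    by (rule card_pairs_int[OF fB])
  also have "int (card ?B) = int (card A) - cnt \<sigma> T A"
  proof -
    have "A = ?B \<union> {a\<in>A. \<sigma> a \<in> T}" by auto
    then have "card A = card ?B + card {a\<in>A. \<sigma> a \<in> T}"
      using assms by (metis (no_types, lifting) card_Un_disjoint disjoint_iff finite_Un mem_Collect_eq)
    then show ?thesis unfolding cnt_def by simp
  qed
  finally show ?thesis by simp
qed

lemma pairs_prod: "(\<Prod>(i,j)\<in>{(i,j). i \<in> A \<and> j \<in> A \<and> i < j}. g i j) = (\<Prod>x\<in>pairs A. g (fst x) (snd x))"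
  by (simp add: pairs_def case_prod_unfold)

lemma mconst0: "mconst 0 = 0" by (simp add: mconst_def)

lemma low_pg:
  assumes adm: "admissible_partition N m k n s" and kk: "k - k1 \<le> k3" "k3 \<le> k" "k \<le> N" and fS: "finite S"
  shows "lowP 0 S ((\<Sum>q\<in>{1..N}. cnt \<sigma> S (s q) * (cnt \<sigma> S (s q) - 1))
     + (\<Sum>q\<in>{k-k1+1..k3}. cnt \<sigma> S (s q)) + (\<Sum>q\<in>{k3+1..k}. cnt \<sigma> S (s q)))
     (pg N k k1 k3 s (\<lambda>i. mvar (\<sigma> i)))"
proof -
  let ?f = "\<lambda>i. mvar (\<sigma> i)"
  have F1: "lowP 0 S (\<Sum>q\<in>{1..N}. \<Sum>x\<in>pairs (s q). if \<sigma> (fst x) \<in> S \<and> \<sigma> (snd x) \<in> S then 2 else 0)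
     (\<Prod>q\<in>{1..N}. \<Prod>x\<in>pairs (s q). [:(?f (fst x) - ?f (snd x))^2:])"
  proof (rule lowP_prod)
    fix q assume q: "q \<in> {1..N}"
    show "lowP 0 S (\<Sum>x\<in>pairs (s q). if \<sigma> (fst x) \<in> S \<and> \<sigma> (snd x) \<in> S then 2 else 0)
     (\<Prod>x\<in>pairs (s q). [:(?f (fst x) - ?f (snd x))^2:])"
    proof (intro lowP_prod lowP_const)
      show "finite (pairs (s q))" using adm_card[OF adm q] by (simp add: finite_pairs)
      fix x
      show "lowM S (if \<sigma> (fst x) \<in> S \<and> \<sigma> (snd x) \<in> S then 2 else 0) ((?f (fst x) - ?f (snd x))\<^sup>2)"
        using lowM_diff_sq[OF fS, of "\<sigma> (fst x)" "\<sigma> (snd x)" 2] by (simp only: of_nat_numeral)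
    qed
  qed simp
  have F3: "lowP 0 S (\<Sum>j\<in>(\<Union>q\<in>{k-k1+1..k3}. s q). (if \<sigma> j \<in> S then 1 else 0) + 0)
     (\<Prod>j\<in>(\<Union>q\<in>{k-k1+1..k3}. s q). [:?f j - mconst 0:] * ([:?f j:] - [:0, 1:]))"
    by (intro lowP_prod lowP_mult lowP_const finite_group_union[OF adm] lowP0)
       (use kk lowM_mvar[OF fS] in \<open>auto simp: mconst0\<close>)
  have F4: "lowP 0 S (\<Sum>j\<in>(\<Union>q\<in>{k3+1..k}. s q). (if \<sigma> j \<in> S then 1 else 0) + 0)
     (\<Prod>j\<in>(\<Union>q\<in>{k3+1..k}. s q). [:?f j - mconst 0:] * [:?f j - mconst 1:])"
    by (intro lowP_prod lowP_mult lowP_const finite_group_union[OF adm] lowM_0)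
       (use kk lowM_mvar[OF fS] in \<open>auto simp: mconst0\<close>)
  have "lowP 0 S ((\<Sum>q\<in>{1..N}. \<Sum>x\<in>pairs (s q). if \<sigma> (fst x) \<in> S \<and> \<sigma> (snd x) \<in> S then 2 else 0) + 0
      + (\<Sum>j\<in>(\<Union>q\<in>{k-k1+1..k3}. s q). (if \<sigma> j \<in> S then 1 else 0) + 0)
      + (\<Sum>j\<in>(\<Union>q\<in>{k3+1..k}. s q). (if \<sigma> j \<in> S then 1 else 0) + 0)) (pg N k k1 k3 s ?f)"
    unfolding pg_def pairs_prod by (intro lowP_mult F1 F3 F4 lowP0)
  moreover have "(\<Sum>q\<in>{1..N}. \<Sum>x\<in>pairs (s q). if \<sigma> (fst x) \<in> S \<and> \<sigma> (snd x) \<in> S then 2 else 0)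
     = (\<Sum>q\<in>{1..N}. cnt \<sigma> S (s q) * (cnt \<sigma> S (s q) - 1))"
    by (rule sum.cong) (use adm_card[OF adm] pair_sum_low in auto)
  moreover have "(\<Sum>j\<in>(\<Union>q\<in>{k-k1+1..k3}. s q). (if \<sigma> j \<in> S then 1 else 0) + 0) = (\<Sum>q\<in>{k-k1+1..k3}. cnt \<sigma> S (s q))"
  proof -
    have "(\<Sum>j\<in>(\<Union>q\<in>{k-k1+1..k3}. s q). (if \<sigma> j \<in> S then 1 else 0) + 0) = (\<Sum>q\<in>{k-k1+1..k3}. \<Sum>j\<in>s q. if \<sigma> j \<in> S then 1 else (0::int))"
      by (simp only: add_0_right) (rule sum_group_union[OF adm], use kk in auto)
    also have "\<dots> = (\<Sum>q\<in>{k-k1+1..k3}. cnt \<sigma> S (s q))"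
      by (rule sum.cong[OF refl], rule sum_cnt) (use kk adm_card[OF adm] in auto)
    finally show ?thesis .
  qed
  moreover have "(\<Sum>j\<in>(\<Union>q\<in>{k3+1..k}. s q). (if \<sigma> j \<in> S then 1 else 0) + 0) = (\<Sum>q\<in>{k3+1..k}. cnt \<sigma> S (s q))"
  proof -
    have "(\<Sum>j\<in>(\<Union>q\<in>{k3+1..k}. s q). (if \<sigma> j \<in> S then 1 else 0) + 0) = (\<Sum>q\<in>{k3+1..k}. \<Sum>j\<in>s q. if \<sigma> j \<in> S then 1 else (0::int))"
      by (simp only: add_0_right) (rule sum_group_union[OF adm], use kk in auto)
    also have "\<dots> = (\<Sum>q\<in>{k3+1..k}. cnt \<sigma> S (s q))"
      by (rule sum.cong[OF refl], rule sum_cnt) (use kk adm_card[OF adm] in auto)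
    finally show ?thesis .
  qed
  ultimately show ?thesis by simp
qed

lemma highM_mvar_c: "finite T \<Longrightarrow> highM T (if \<sigma> j \<in> T then 1 else 0) (mvar (\<sigma> j) - mconst c)"
  by (intro highM_diff highM_mvar) (auto intro: highM_mono[OF highM_mconst])

lemma highP_Xfac: "finite T \<Longrightarrow> highP 1 T 1 ([:mvar v:] - [:0, 1:])"
  by (intro highP_diff highP_X highP_const) (auto intro: highM_mono[OF highM_mvar])

lemma high_pg:
  assumes adm: "admissible_partition N m k n s" and kk: "k - k1 \<le> k3" "k3 \<le> k" "k \<le> N" and fT: "finite T"
  shows "highP 1 T ((\<Sum>q\<in>{1..N}. int (card (s q)) * (int (card (s q)) - 1)
          - (int (card (s q)) - cnt \<sigma> T (s q)) * (int (card (s q)) - cnt \<sigma> T (s q) - 1))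
     + ((\<Sum>q\<in>{1..k-k1}. cnt \<sigma> T (s q)) + int (card (\<Union>q\<in>{1..k-k1}. s q)))
     + ((\<Sum>q\<in>{k-k1+1..k3}. cnt \<sigma> T (s q)) + int (card (\<Union>q\<in>{k-k1+1..k3}. s q)))
     + (\<Sum>q\<in>{k3+1..k}. 2 * cnt \<sigma> T (s q)))
     (pg N k k1 k3 s (\<lambda>i. mvar (\<sigma> i)))"
proof -
  let ?f = "\<lambda>i. mvar (\<sigma> i)"
  have F1: "highP 1 T (\<Sum>q\<in>{1..N}. \<Sum>x\<in>pairs (s q). if \<sigma> (fst x) \<in> T \<or> \<sigma> (snd x) \<in> T then 2 else 0)
     (\<Prod>q\<in>{1..N}. \<Prod>x\<in>pairs (s q). [:(?f (fst x) - ?f (snd x))^2:])"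
  proof (rule highP_prod)
    fix q assume q: "q \<in> {1..N}"
    show "highP 1 T (\<Sum>x\<in>pairs (s q). if \<sigma> (fst x) \<in> T \<or> \<sigma> (snd x) \<in> T then 2 else 0)
     (\<Prod>x\<in>pairs (s q). [:(?f (fst x) - ?f (snd x))^2:])"
    proof (intro highP_prod highP_const)
      show "finite (pairs (s q))" using adm_card[OF adm q] by (simp add: finite_pairs)
      fix x
      show "highM T (if \<sigma> (fst x) \<in> T \<or> \<sigma> (snd x) \<in> T then 2 else 0) ((?f (fst x) - ?f (snd x))\<^sup>2)"
        using highM_diff_sq[OF fT, of "\<sigma> (fst x)" "\<sigma> (snd x)" 2] by (simp only: of_nat_numeral)
    qed
  qed simp
  have F2: "highP 1 T (\<Sum>j\<in>(\<Union>q\<in>{1..k-k1}. s q). (if \<sigma> j \<in> T then 1 else 0) + 1)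
     (\<Prod>j\<in>(\<Union>q\<in>{1..k-k1}. s q). [:?f j - mconst 1:] * ([:?f j:] - [:0, 1:]))"
    by (intro highP_prod highP_mult highP_const finite_group_union[OF adm] highM_mvar_c highP_Xfac fT)
       (use kk in auto)
  have F3: "highP 1 T (\<Sum>j\<in>(\<Union>q\<in>{k-k1+1..k3}. s q). (if \<sigma> j \<in> T then 1 else 0) + 1)
     (\<Prod>j\<in>(\<Union>q\<in>{k-k1+1..k3}. s q). [:?f j - mconst 0:] * ([:?f j:] - [:0, 1:]))"
    by (intro highP_prod highP_mult highP_const finite_group_union[OF adm] highM_mvar_c highP_Xfac fT)
       (use kk in auto)
  have F4: "highP 1 T (\<Sum>j\<in>(\<Union>q\<in>{k3+1..k}. s q). (if \<sigma> j \<in> T then 1 else 0) + (if \<sigma> j \<in> T then 1 else 0))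
     (\<Prod>j\<in>(\<Union>q\<in>{k3+1..k}. s q). [:?f j - mconst 0:] * [:?f j - mconst 1:])"
    by (intro highP_prod highP_mult highP_const finite_group_union[OF adm] highM_mvar_c fT)
       (use kk in auto)
  have main: "highP 1 T ((\<Sum>q\<in>{1..N}. \<Sum>x\<in>pairs (s q). if \<sigma> (fst x) \<in> T \<or> \<sigma> (snd x) \<in> T then 2 else 0)
      + (\<Sum>j\<in>(\<Union>q\<in>{1..k-k1}. s q). (if \<sigma> j \<in> T then 1 else 0) + 1)
      + (\<Sum>j\<in>(\<Union>q\<in>{k-k1+1..k3}. s q). (if \<sigma> j \<in> T then 1 else 0) + 1)
      + (\<Sum>j\<in>(\<Union>q\<in>{k3+1..k}. s q). (if \<sigma> j \<in> T then 1 else 0) + (if \<sigma> j \<in> T then 1 else 0))) (pg N k k1 k3 s ?f)"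
    unfolding pg_def pairs_prod by (intro highP_mult F1 F2 F3 F4)
  have E1: "(\<Sum>q\<in>{1..N}. \<Sum>x\<in>pairs (s q). if \<sigma> (fst x) \<in> T \<or> \<sigma> (snd x) \<in> T then 2 else 0)
     = (\<Sum>q\<in>{1..N}. int (card (s q)) * (int (card (s q)) - 1)
          - (int (card (s q)) - cnt \<sigma> T (s q)) * (int (card (s q)) - cnt \<sigma> T (s q) - 1))"
  proof (rule sum.cong[OF refl])
    fix q assume "q \<in> {1..N}"
    then have "finite (s q)" using adm_card[OF adm] by blast
    then show "(\<Sum>x\<in>pairs (s q). if \<sigma> (fst x) \<in> T \<or> \<sigma> (snd x) \<in> T then 2 else 0) =
      int (card (s q)) * (int (card (s q)) - 1) - (int (card (s q)) - cnt \<sigma> T (s q)) * (int (card (s q)) - cnt \<sigma> T (s q) - 1)"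
      by (rule pair_sum_high)
  qed
  have GS: "(\<Sum>j\<in>(\<Union>q\<in>{a..b}. s q). if \<sigma> j \<in> T then 1 else 0) = (\<Sum>q\<in>{a..b}. cnt \<sigma> T (s q))"
    if "1 \<le> a" "b \<le> k" for a b
  proof -
    have "(\<Sum>j\<in>(\<Union>q\<in>{a..b}. s q). if \<sigma> j \<in> T then 1 else 0) = (\<Sum>q\<in>{a..b}. \<Sum>j\<in>s q. if \<sigma> j \<in> T then 1 else (0::int))"
      by (rule sum_group_union[OF adm]) (use kk that in auto)
    also have "\<dots> = (\<Sum>q\<in>{a..b}. cnt \<sigma> T (s q))"
      by (rule sum.cong[OF refl], rule sum_cnt) (use kk that adm_card[OF adm] in auto)
    finally show ?thesis .
  qed
  have E2: "(\<Sum>j\<in>(\<Union>q\<in>{a..b}. s q). (if \<sigma> j \<in> T then 1 else 0) + 1) = (\<Sum>q\<in>{a..b}. cnt \<sigma> T (s q)) + int (card (\<Union>q\<in>{a..b}. s q))"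
    if "1 \<le> a" "b \<le> k" for a b
    using GS[OF that] by (simp add: sum.distrib)
  have E4: "(\<Sum>j\<in>(\<Union>q\<in>{k3+1..k}. s q). (if \<sigma> j \<in> T then 1 else 0) + (if \<sigma> j \<in> T then 1 else 0)) = (\<Sum>q\<in>{k3+1..k}. 2 * cnt \<sigma> T (s q))"
  proof -
    have "(\<Sum>j\<in>(\<Union>q\<in>{k3+1..k}. s q). (if \<sigma> j \<in> T then 1 else 0) + (if \<sigma> j \<in> T then 1 else 0))
       = 2 * (\<Sum>j\<in>(\<Union>q\<in>{k3+1..k}. s q). (if \<sigma> j \<in> T then 1 else (0::int)))"
      by (simp only: sum.distrib mult_2)
    also have "\<dots> = 2 * (\<Sum>q\<in>{k3+1..k}. cnt \<sigma> T (s q))" using GS[of "k3+1" k] by simp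
    also have "\<dots> = (\<Sum>q\<in>{k3+1..k}. 2 * cnt \<sigma> T (s q))" by (rule sum_distrib_left)
    finally show ?thesis .
  qed
  have E2a: "(\<Sum>j\<in>(\<Union>q\<in>{1..k-k1}. s q). (if \<sigma> j \<in> T then 1 else 0) + 1) = (\<Sum>q\<in>{1..k-k1}. cnt \<sigma> T (s q)) + int (card (\<Union>q\<in>{1..k-k1}. s q))"
    by (rule E2) (use kk in auto)
  have E2b: "(\<Sum>j\<in>(\<Union>q\<in>{k-k1+1..k3}. s q). (if \<sigma> j \<in> T then 1 else 0) + 1) = (\<Sum>q\<in>{k-k1+1..k3}. cnt \<sigma> T (s q)) + int (card (\<Union>q\<in>{k-k1+1..k3}. s q))"
    by (rule E2) (use kk in auto)
  show ?thesis
    using main unfolding E1 E2a E2b E4 .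
qed

lemma sq_bound_even: "(d::int) * d - 2 * a * d \<ge> - (a * a)"
proof -
  have "(d - a) * (d - a) \<ge> 0" by simp
  then show ?thesis by (simp add: algebra_simps)
qed

lemma consec_nonneg: "(x::int) * (x - 1) \<ge> 0"
proof (cases "x \<ge> 1")
  case True then show ?thesis by simp
next
  case False then have "x \<le> 0" by simp
  then show ?thesis by (simp add: mult_nonpos_nonpos)
qed

lemma sq_bound_odd: "(d::int) * d - (2 * a + 1) * d \<ge> - (a * (a + 1))"
proof -
  have "(d - a) * ((d - a) - 1) \<ge> 0" by (rule consec_nonneg)
  then show ?thesis by (simp add: algebra_simps)
qed

lemma arithA:
  fixes p j N i :: int
  assumes "i = p * N + j" "j \<ge> 1" "p \<ge> 0"
  shows "2 * p * i - N * (p * (p + 1)) \<ge> i * (p - 1) + 1"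
proof -
  have "2 * p * i - N * (p * (p + 1)) - (i * (p - 1) + 1) = p * j + j - 1"
    using assms(1) by (simp add: algebra_simps)
  moreover have "p * j \<ge> 0" using assms by simp
  ultimately show ?thesis using assms by linarith
qed

lemma arithB:
  fixes p j N i k1 :: int
  assumes "i = p * N + j" "j > N - k1" "p \<ge> 0"
  shows "(2 * p + 1) * i - k1 * (p * (p + 1)) - (N - k1) * ((p + 1) * (p + 1)) \<ge> i * p + 1"
proof -
  have "(2 * p + 1) * i - k1 * (p * (p + 1)) - (N - k1) * ((p + 1) * (p + 1)) - (i * p + 1) = (p + 1) * (j - N + k1) - 1"
    using assms(1) by (simp add: algebra_simps)
  moreover have "(p + 1) * (j - N + k1) \<ge> 1 * 1"
    using assms by (intro mult_mono) auto
  ultimately show ?thesis by linarith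
qed


lemma diff_eq_nonneg: "(a::int) - b = z \<Longrightarrow> 0 \<le> z \<Longrightarrow> b \<le> a"
  by linarith

lemma up_group:
  fixes M c w lam K :: int
  assumes "\<And>d. d * d - (lam + 1 - w) * d \<ge> - K"
  shows "M * (M - 1) - (M - c) * (M - c - 1) + w * c \<le> M * (M - 1) + w * M - lam * M + K + lam * c"
proof -
  have "(M - c) * (M - c) - (lam + 1 - w) * (M - c) \<ge> - K" by (rule assms)
  then show ?thesis by (simp add: algebra_simps)
qed

lemma arith4:
  fixes m p N k k3 j t :: int
  assumes "0 \<le> p" "p \<le> m - 1" "1 \<le> j" "j \<le> N - k" "0 \<le> k3" "k3 \<le> k" "k \<le> N"
    and t: "t = m * N - k - (p * N + j) + 1"
  shows "k3 * ((m - 1) * (m - 2) + (m - 1) - 2 * p * (m - 1) + p * p)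
     + (k - k3) * ((m - 1) * (m - 2) + 2 * (m - 1) - 2 * p * (m - 1) + (p - 1) * p)
     + (N - k) * (m * (m - 1) - 2 * p * m + p * (p + 1)) + 2 * p * t \<le> t * (m + p - 1 + 1) - 1"
proof -
  have "t * (m + p - 1 + 1) - 1 - (k3 * ((m - 1) * (m - 2) + (m - 1) - 2 * p * (m - 1) + p * p)
     + (k - k3) * ((m - 1) * (m - 2) + 2 * (m - 1) - 2 * p * (m - 1) + (p - 1) * p)
     + (N - k) * (m * (m - 1) - 2 * p * m + p * (p + 1)) + 2 * p * t) = (m - p) * (N - k - j + 1 + k3) - k3 - 1"
    unfolding t by (simp add: algebra_simps)
  moreover have "(m - p) * (N - k - j + 1 + k3) \<ge> 1 * (N - k - j + 1 + k3)"
    using assms by (intro mult_right_mono) auto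
  then have "(m - p) * (N - k - j + 1 + k3) - k3 - 1 \<ge> 0" using assms(4) by simp
  ultimately show ?thesis by (rule diff_eq_nonneg)
qed

lemma arith5:
  fixes m p N k k3 j t :: int
  assumes "0 \<le> p" "p \<le> m - 2" "N - k < j" "j \<le> N - k + k3" "0 \<le> k3" "k3 \<le> k" "k \<le> N"
    and t: "t = m * N - k - (p * N + j) + 1"
  shows "k3 * ((m - 1) * (m - 2) + (m - 1) - (2 * p + 1) * (m - 1) + p * (p + 1))
     + (k - k3) * ((m - 1) * (m - 2) + 2 * (m - 1) - (2 * p + 1) * (m - 1) + p * p)
     + (N - k) * (m * (m - 1) - (2 * p + 1) * m + (p + 1) * (p + 1)) + (2 * p + 1) * t \<le> t * (m + p - 1 + 1) - 1"
proof -
  have "t * (m + p - 1 + 1) - 1 - (k3 * ((m - 1) * (m - 2) + (m - 1) - (2 * p + 1) * (m - 1) + p * (p + 1))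
     + (k - k3) * ((m - 1) * (m - 2) + 2 * (m - 1) - (2 * p + 1) * (m - 1) + p * p)
     + (N - k) * (m * (m - 1) - (2 * p + 1) * m + (p + 1) * (p + 1)) + (2 * p + 1) * t) = (m - p - 1) * (N - k + k3 + 1 - j) - 1"
    unfolding t by (simp add: algebra_simps)
  moreover have "(m - p - 1) * (N - k + k3 + 1 - j) \<ge> 1 * 1"
    using assms by (intro mult_mono) auto
  then have "(m - p - 1) * (N - k + k3 + 1 - j) - 1 \<ge> 0" by simp
  ultimately show ?thesis by (rule diff_eq_nonneg)
qed

lemma arith6:
  fixes m p N k k3 j t :: int
  assumes "0 \<le> p" "p \<le> m - 2" "j \<le> N" "0 \<le> k3" "k3 \<le> k" "k \<le> N"
    and t: "t = m * N - k - (p * N + j) + 1"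
  shows "k3 * ((m - 1) * (m - 2) + (m - 1) - (2 * p + 2) * (m - 1) + (p + 1) * (p + 1))
     + (k - k3) * ((m - 1) * (m - 2) + 2 * (m - 1) - (2 * p + 2) * (m - 1) + p * (p + 1))
     + (N - k) * (m * (m - 1) - (2 * p + 2) * m + (p + 1) * (p + 2)) + (2 * p + 2) * t \<le> t * (m + p + 1) - 1"
proof -
  have "t * (m + p + 1) - 1 - (k3 * ((m - 1) * (m - 2) + (m - 1) - (2 * p + 2) * (m - 1) + (p + 1) * (p + 1))
     + (k - k3) * ((m - 1) * (m - 2) + 2 * (m - 1) - (2 * p + 2) * (m - 1) + p * (p + 1))
     + (N - k) * (m * (m - 1) - (2 * p + 2) * m + (p + 1) * (p + 2)) + (2 * p + 2) * t) = (m - p - 1) * (2 * N - k - j + k3 + 1) - k3 - 1"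
    unfolding t by (simp add: algebra_simps)
  moreover have "(m - p - 1) * (2 * N - k - j + k3 + 1) \<ge> 1 * (2 * N - k - j + k3 + 1)"
    using assms by (intro mult_right_mono) auto
  then have "(m - p - 1) * (2 * N - k - j + k3 + 1) - k3 - 1 \<ge> 0" using assms(3,6) by simp
  ultimately show ?thesis by (rule diff_eq_nonneg)
qed

lemma cnt_nonneg: "cnt \<sigma> S A \<ge> 0" by (simp add: cnt_def)

lemma cnt_sum:
  assumes adm: "admissible_partition N m k n s" and perm: "\<sigma> permutes {1..n}" and S: "S \<subseteq> {1..n}"
  shows "(\<Sum>q\<in>{1..N}. cnt \<sigma> S (s q)) = int (card S)"
proof -
  have fin: "\<forall>q\<in>{1..N}. finite {a\<in>s q. \<sigma> a \<in> S}" using adm_card[OF adm] by auto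
  have dis: "\<forall>q\<in>{1..N}. \<forall>q'\<in>{1..N}. q \<noteq> q' \<longrightarrow> {a\<in>s q. \<sigma> a \<in> S} \<inter> {a\<in>s q'. \<sigma> a \<in> S} = {}"
    using adm unfolding admissible_partition_def by blast
  have "(\<Sum>q\<in>{1..N}. cnt \<sigma> S (s q)) = int (\<Sum>q\<in>{1..N}. card {a\<in>s q. \<sigma> a \<in> S})"
    by (simp add: cnt_def)
  also have "(\<Sum>q\<in>{1..N}. card {a\<in>s q. \<sigma> a \<in> S}) = card (\<Union>q\<in>{1..N}. {a\<in>s q. \<sigma> a \<in> S})"
    by (rule card_UN_disjoint[symmetric]) (use fin dis in auto)
  also have "(\<Union>q\<in>{1..N}. {a\<in>s q. \<sigma> a \<in> S}) = {a\<in>{1..n}. \<sigma> a \<in> S}"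
    using adm unfolding admissible_partition_def by blast
  also have "card {a\<in>{1..n}. \<sigma> a \<in> S} = card S"
  proof -
    have inj: "inj \<sigma>" using perm by (rule permutes_inj)
    have im: "\<sigma> ` {1..n} = {1..n}" using perm by (rule permutes_image)
    have "\<sigma> ` {a\<in>{1..n}. \<sigma> a \<in> S} = S"
    proof
      show "\<sigma> ` {a\<in>{1..n}. \<sigma> a \<in> S} \<subseteq> S" by auto
      show "S \<subseteq> \<sigma> ` {a\<in>{1..n}. \<sigma> a \<in> S}"
      proof
        fix y assume y: "y \<in> S"
        then have "y \<in> \<sigma> ` {1..n}" using S im by auto
        then obtain a where "a \<in> {1..n}" "\<sigma> a = y" by blast
        then show "y \<in> \<sigma> ` {a\<in>{1..n}. \<sigma> a \<in> S}" using y by blast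
      qed
    qed
    moreover have "card (\<sigma> ` {a\<in>{1..n}. \<sigma> a \<in> S}) = card {a\<in>{1..n}. \<sigma> a \<in> S}"
      by (rule card_image) (use inj in \<open>auto simp: inj_on_def\<close>)
    ultimately show ?thesis by simp
  qed
  finally show ?thesis .
qed

lemma lowM_P_poly:
  assumes adm: "admissible_partition N m k n s" and kk: "k1 \<le> k" "k3 \<le> k" "k \<le> N" "k - k1 \<le> k3"
    and H: "\<And>\<sigma>. \<sigma> permutes {1..n} \<Longrightarrow> lowP 0 S L (pg N k k1 k3 s (\<lambda>i. mvar (\<sigma> i)))"
  shows "lowM S L (P_poly N m k k1 k3 n s)"
proof -
  have "lowP 0 S (0 + L) (Qg N m k k1 k3 n s)"
    unfolding Qg_def by (intro lowP_mult lowP_const lowM_mconst lowP_sum H) auto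
  then have "lowM S L (coeff (Qg N m k k1 k3 n s) ((m - 1) * k3))" unfolding lowP_def by simp
  then show ?thesis using keys_P_poly[OF adm kk] unfolding lowM_def by blast
qed

lemma highM_P_poly:
  assumes adm: "admissible_partition N m k n s" and kk: "k1 \<le> k" "k3 \<le> k" "k \<le> N" "k - k1 \<le> k3"
    and H: "\<And>\<sigma>. \<sigma> permutes {1..n} \<Longrightarrow> highP 1 S (U + int ((m - 1) * k3)) (pg N k k1 k3 s (\<lambda>i. mvar (\<sigma> i)))"
  shows "highM S U (P_poly N m k k1 k3 n s)"
proof -
  have "highP 1 S (0 + (U + int ((m - 1) * k3))) (Qg N m k k1 k3 n s)"
    unfolding Qg_def by (intro highP_mult highP_const highM_mconst highP_sum H) auto
  then have "highM S (0 + (U + int ((m - 1) * k3)) - 1 * int ((m - 1) * k3)) (coeff (Qg N m k k1 k3 n s) ((m - 1) * k3))"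
    unfolding highP_def by blast
  then have "highM S U (coeff (Qg N m k k1 k3 n s) ((m - 1) * k3))" by simp
  then show ?thesis using keys_P_poly[OF adm kk] unfolding highM_def by blast
qed

lemma lower_final:
  assumes nu: "\<nu> \<in> Poly_Mapping.keys F" and low: "lowM {1..i} L F"
    and sorted: "\<forall>i j. 1 \<le> i \<longrightarrow> i \<le> j \<longrightarrow> j \<le> n \<longrightarrow> Poly_Mapping.lookup \<nu> i \<le> Poly_Mapping.lookup \<nu> j"
    and i: "1 \<le> i" "i \<le> n" and L: "L > int i * (X - 1)"
  shows "int (Poly_Mapping.lookup \<nu> i) \<ge> X"
proof -
  have "L \<le> degS {1..i} \<nu>" using low nu unfolding lowM_def by blast
  also have "degS {1..i} \<nu> \<le> (\<Sum>v\<in>{1..i}. int (Poly_Mapping.lookup \<nu> i))"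
    unfolding degS_def by (rule sum_mono) (use sorted i in auto)
  also have "\<dots> = int i * int (Poly_Mapping.lookup \<nu> i)" by simp
  finally have "int i * (X - 1) < int i * int (Poly_Mapping.lookup \<nu> i)" using L by linarith
  then have "X - 1 < int (Poly_Mapping.lookup \<nu> i)"
    using i by (simp add: mult_less_cancel_left)
  then show ?thesis by linarith
qed

lemma upper_final:
  assumes nu: "\<nu> \<in> Poly_Mapping.keys F" and high: "highM {i..n} U F"
    and sorted: "\<forall>i j. 1 \<le> i \<longrightarrow> i \<le> j \<longrightarrow> j \<le> n \<longrightarrow> Poly_Mapping.lookup \<nu> i \<le> Poly_Mapping.lookup \<nu> j"
    and i: "1 \<le> i" "i \<le> n" and U: "U < (int n - int i + 1) * (X + 1)"
  shows "int (Poly_Mapping.lookup \<nu> i) \<le> X"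
proof -
  have "(\<Sum>v\<in>{i..n}. int (Poly_Mapping.lookup \<nu> i)) \<le> degS {i..n} \<nu>"
    unfolding degS_def by (rule sum_mono) (use sorted i in auto)
  also have "degS {i..n} \<nu> \<le> U" using high nu unfolding highM_def by blast
  finally have A: "(\<Sum>v\<in>{i..n}. int (Poly_Mapping.lookup \<nu> i)) \<le> U" .
  have B: "(\<Sum>v\<in>{i..n}. int (Poly_Mapping.lookup \<nu> i)) = (int n - int i + 1) * int (Poly_Mapping.lookup \<nu> i)"
    using i by (simp add: of_nat_diff algebra_simps)
  from A have "(int n - int i + 1) * int (Poly_Mapping.lookup \<nu> i) \<le> U" unfolding B .
  then have "(int n - int i + 1) * int (Poly_Mapping.lookup \<nu> i) < (int n - int i + 1) * (X + 1)"
    using U by linarith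
  then have "int (Poly_Mapping.lookup \<nu> i) < X + 1"
    using i by (simp add: mult_less_cancel_left)
  then show ?thesis by linarith
qed

lemma sum_split_ivl:
  fixes f :: "nat \<Rightarrow> 'a::comm_monoid_add"
  assumes "a \<le> b" "b \<le> c"
  shows "(\<Sum>q\<in>{a+1..c}. f q) = (\<Sum>q\<in>{a+1..b}. f q) + (\<Sum>q\<in>{b+1..c}. f q)"
proof -
  have "{a+1..c} = {a+1..b} \<union> {b+1..c}" using assms by auto
  moreover have "{a+1..b} \<inter> {b+1..c} = {}" by auto
  ultimately show ?thesis by (simp add: sum.union_disjoint)
qed

lemma sum_split_ivl1:
  fixes f :: "nat \<Rightarrow> 'a::comm_monoid_add"
  assumes "b \<le> c"
  shows "(\<Sum>q\<in>{1..c}. f q) = (\<Sum>q\<in>{1..b}. f q) + (\<Sum>q\<in>{b+1..c}. f q)"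
  using sum_split_ivl[of 0 b c f] assms by simp

lemma lower_lin:
  fixes f c :: "nat \<Rightarrow> int"
  assumes "\<And>q. q \<in> A \<Longrightarrow> f q \<ge> lam * c q - K"
  shows "(\<Sum>q\<in>A. f q) \<ge> lam * (\<Sum>q\<in>A. c q) - int (card A) * K"
proof -
  have "(\<Sum>q\<in>A. lam * c q - K) \<le> (\<Sum>q\<in>A. f q)" by (rule sum_mono) (rule assms)
  moreover have "(\<Sum>q\<in>A. lam * c q - K) = lam * (\<Sum>q\<in>A. c q) - int (card A) * K"
    by (simp add: sum_subtractf sum_distrib_left)
  ultimately show ?thesis by simp
qed

lemma upper_lin:
  fixes f c :: "nat \<Rightarrow> int"
  assumes "\<And>q. q \<in> A \<Longrightarrow> f q \<le> al + lam * c q"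
  shows "(\<Sum>q\<in>A. f q) \<le> int (card A) * al + lam * (\<Sum>q\<in>A. c q)"
proof -
  have "(\<Sum>q\<in>A. f q) \<le> (\<Sum>q\<in>A. al + lam * c q)" by (rule sum_mono) (rule assms)
  moreover have "(\<Sum>q\<in>A. al + lam * c q) = int (card A) * al + lam * (\<Sum>q\<in>A. c q)"
    by (simp add: sum.distrib sum_distrib_left)
  ultimately show ?thesis by simp
qed

lemma combA:
  fixes c :: "nat \<Rightarrow> int" and p j :: int
  assumes c0: "\<And>q. c q \<ge> 0" and cs: "(\<Sum>q\<in>{1..N}. c q) = int i"
    and i: "int i = p * int N + j" and j: "j \<ge> 1" and p: "p \<ge> 0"
  shows "int i * (p - 1) < (\<Sum>q\<in>{1..N}. c q * (c q - 1)) + (\<Sum>q\<in>A. c q) + (\<Sum>q\<in>B. c q)"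
proof -
  have "(\<Sum>q\<in>{1..N}. c q * (c q - 1)) \<ge> (2 * p) * (\<Sum>q\<in>{1..N}. c q) - int (card {1..N}) * (p * (p + 1))"
  proof (rule lower_lin)
    fix q
    have "c q * c q - (2 * p + 1) * c q \<ge> - (p * (p + 1))" by (rule sq_bound_odd)
    then show "c q * (c q - 1) \<ge> 2 * p * c q - p * (p + 1)" by (simp add: algebra_simps)
  qed
  then have X: "(\<Sum>q\<in>{1..N}. c q * (c q - 1)) \<ge> 2 * p * int i - int N * (p * (p + 1))"
    unfolding cs by simp
  have A: "(\<Sum>q\<in>A. c q) \<ge> 0" and B: "(\<Sum>q\<in>B. c q) \<ge> 0" by (simp_all add: sum_nonneg c0)
  have "2 * p * int i - int N * (p * (p + 1)) \<ge> int i * (p - 1) + 1"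
    by (rule arithA[OF i j p])
  with X A B show ?thesis by linarith
qed

lemma combB:
  fixes c :: "nat \<Rightarrow> int" and p j :: int
  assumes c0: "\<And>q. c q \<ge> 0" and cs: "(\<Sum>q\<in>{1..N}. c q) = int i"
    and i: "int i = p * int N + j" and j: "j > int N - int k1" and p: "p \<ge> 0"
    and kk: "k1 \<le> k" "k \<le> N" "k - k1 \<le> k3" "k3 \<le> k"
  shows "int i * (p + 1 - 1) < (\<Sum>q\<in>{1..N}. c q * (c q - 1)) + (\<Sum>q\<in>{k-k1+1..k3}. c q) + (\<Sum>q\<in>{k3+1..k}. c q)"
proof -
  define X1 where "X1 = (\<Sum>q\<in>{1..k-k1}. c q * (c q - 1))"
  define X2 where "X2 = (\<Sum>q\<in>{k-k1+1..k}. c q * (c q - 1))"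
  define X3 where "X3 = (\<Sum>q\<in>{k+1..N}. c q * (c q - 1))"
  define Y1 where "Y1 = (\<Sum>q\<in>{1..k-k1}. c q)"
  define Y2 where "Y2 = (\<Sum>q\<in>{k-k1+1..k}. c q)"
  define Y3 where "Y3 = (\<Sum>q\<in>{k+1..N}. c q)"
  define lam where "lam = 2 * p + 1"
  have s1: "(\<Sum>q\<in>{k-k1+1..k3}. c q) + (\<Sum>q\<in>{k3+1..k}. c q) = Y2"
    unfolding Y2_def using sum_split_ivl[of "k-k1" k3 k c] kk by simp
  have s2: "(\<Sum>q\<in>{1..N}. f q) = (\<Sum>q\<in>{1..k-k1}. f q) + (\<Sum>q\<in>{k-k1+1..k}. f q) + (\<Sum>q\<in>{k+1..N}. f q)"
    for f :: "nat \<Rightarrow> int"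
    using sum_split_ivl1[of "k-k1" k f] sum_split_ivl1[of k N f] kk by simp
  have L1: "X1 \<ge> lam * Y1 - int (card {1..k-k1}) * ((p + 1) * (p + 1))"
    unfolding X1_def Y1_def
  proof (rule lower_lin)
    fix q
    have "c q * c q - 2 * (p + 1) * c q \<ge> - ((p + 1) * (p + 1))" by (rule sq_bound_even)
    then show "c q * (c q - 1) \<ge> lam * c q - (p + 1) * (p + 1)" unfolding lam_def by (simp add: algebra_simps)
  qed
  have L3: "X3 \<ge> lam * Y3 - int (card {k+1..N}) * ((p + 1) * (p + 1))"
    unfolding X3_def Y3_def
  proof (rule lower_lin)
    fix q
    have "c q * c q - 2 * (p + 1) * c q \<ge> - ((p + 1) * (p + 1))" by (rule sq_bound_even)
    then show "c q * (c q - 1) \<ge> lam * c q - (p + 1) * (p + 1)" unfolding lam_def by (simp add: algebra_simps)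
  qed
  have L2': "(\<Sum>q\<in>{k-k1+1..k}. c q * (c q - 1) + c q) \<ge> lam * Y2 - int (card {k-k1+1..k}) * (p * (p + 1))"
    unfolding Y2_def
  proof (rule lower_lin)
    fix q
    have "c q * c q - (2 * p + 1) * c q \<ge> - (p * (p + 1))" by (rule sq_bound_odd)
    then show "c q * (c q - 1) + c q \<ge> lam * c q - p * (p + 1)" unfolding lam_def by (simp add: algebra_simps)
  qed
  have L2: "X2 + Y2 \<ge> lam * Y2 - int k1 * (p * (p + 1))"
    using L2' kk unfolding X2_def Y2_def by (simp add: sum.distrib)
  have c1: "int (card {1..k-k1}) = int k - int k1" and c3: "int (card {k+1..N}) = int N - int k"
    using kk by auto
  have csum: "Y1 + Y2 + Y3 = int i" unfolding Y1_def Y2_def Y3_def using cs s2[of c] by simp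
  have lsum: "lam * int i = lam * Y1 + lam * Y2 + lam * Y3"
    unfolding csum[symmetric] by (simp add: distrib_left)
  have qsum: "(int N - int k1) * ((p + 1) * (p + 1)) = (int k - int k1) * ((p + 1) * (p + 1)) + (int N - int k) * ((p + 1) * (p + 1))"
    by (simp add: algebra_simps)
  have ar: "lam * int i - int k1 * (p * (p + 1)) - (int N - int k1) * ((p + 1) * (p + 1)) \<ge> int i * p + 1"
    unfolding lam_def by (rule arithB[OF i j p])
  have tot: "(\<Sum>q\<in>{1..N}. c q * (c q - 1)) + (\<Sum>q\<in>{k-k1+1..k3}. c q) + (\<Sum>q\<in>{k3+1..k}. c q) = X1 + (X2 + Y2) + X3"
    using s2[of "\<lambda>q. c q * (c q - 1)"] s1 unfolding X1_def X2_def X3_def by linarith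
  have "int i * p < X1 + (X2 + Y2) + X3"
    using L1 L2 L3 ar lsum qsum unfolding c1 c3 by linarith
  then show ?thesis unfolding tot by simp
qed

lemma combU:
  fixes c :: "nat \<Rightarrow> int" and lam K0 K1 K2 t :: int
  assumes h0: "\<And>d. d * d - (lam + 1) * d \<ge> - K0" and h1: "\<And>d. d * d - lam * d \<ge> - K1"
    and h2: "\<And>d. d * d - (lam - 1) * d \<ge> - K2"
    and kk: "k3 \<le> k" "k \<le> N" and m: "m \<ge> 1" and cs: "(\<Sum>q\<in>{1..N}. c q) = t"
  shows "(\<Sum>q\<in>{1..N}. int (if q \<le> k then m - 1 else m) * (int (if q \<le> k then m - 1 else m) - 1)
      - (int (if q \<le> k then m - 1 else m) - c q) * (int (if q \<le> k then m - 1 else m) - c q - 1))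
      + (\<Sum>q\<in>{1..k3}. c q) + (\<Sum>q\<in>{k3+1..k}. 2 * c q)
    \<le> int k3 * ((int m - 1) * (int m - 2) + (int m - 1) - lam * (int m - 1) + K1)
      + (int k - int k3) * ((int m - 1) * (int m - 2) + 2 * (int m - 1) - lam * (int m - 1) + K2)
      + (int N - int k) * (int m * (int m - 1) - lam * int m + K0) + lam * t"
proof -
  define PH where "PH q = int (if q \<le> k then m - 1 else m) * (int (if q \<le> k then m - 1 else m) - 1)
      - (int (if q \<le> k then m - 1 else m) - c q) * (int (if q \<le> k then m - 1 else m) - c q - 1)" for q
  define al1 where "al1 = (int m - 1) * (int m - 2) + (int m - 1) - lam * (int m - 1) + K1"
  define al2 where "al2 = (int m - 1) * (int m - 2) + 2 * (int m - 1) - lam * (int m - 1) + K2"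
  define al0 where "al0 = int m * (int m - 1) - lam * int m + K0"
  have s2: "(\<Sum>q\<in>{1..N}. f q) = (\<Sum>q\<in>{1..k3}. f q) + (\<Sum>q\<in>{k3+1..k}. f q) + (\<Sum>q\<in>{k+1..N}. f q)"
    for f :: "nat \<Rightarrow> int"
    using sum_split_ivl1[of k3 N f] sum_split_ivl[of k3 k N f] kk by simp
  have U1: "(\<Sum>q\<in>{1..k3}. PH q + c q) \<le> int (card {1..k3}) * al1 + lam * (\<Sum>q\<in>{1..k3}. c q)"
  proof (rule upper_lin)
    fix q assume q: "q \<in> {1..k3}"
    then have M: "int (if q \<le> k then m - 1 else m) = int m - 1" using kk m by auto
    have "(int m - 1) * (int m - 1 - 1) - (int m - 1 - c q) * (int m - 1 - c q - 1) + 1 * c q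
        \<le> (int m - 1) * (int m - 1 - 1) + 1 * (int m - 1) - lam * (int m - 1) + K1 + lam * c q"
      by (rule up_group) (use h1 in simp)
    then show "PH q + c q \<le> al1 + lam * c q" unfolding PH_def M al1_def by (simp add: algebra_simps)
  qed
  have U2: "(\<Sum>q\<in>{k3+1..k}. PH q + 2 * c q) \<le> int (card {k3+1..k}) * al2 + lam * (\<Sum>q\<in>{k3+1..k}. c q)"
  proof (rule upper_lin)
    fix q assume q: "q \<in> {k3+1..k}"
    then have M: "int (if q \<le> k then m - 1 else m) = int m - 1" using kk m by auto
    have "(int m - 1) * (int m - 1 - 1) - (int m - 1 - c q) * (int m - 1 - c q - 1) + 2 * c q
        \<le> (int m - 1) * (int m - 1 - 1) + 2 * (int m - 1) - lam * (int m - 1) + K2 + lam * c q"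
      by (rule up_group) (use h2 in \<open>simp add: algebra_simps\<close>)
    then show "PH q + 2 * c q \<le> al2 + lam * c q" unfolding PH_def M al2_def by (simp add: algebra_simps)
  qed
  have U3: "(\<Sum>q\<in>{k+1..N}. PH q + 0 * c q) \<le> int (card {k+1..N}) * al0 + lam * (\<Sum>q\<in>{k+1..N}. c q)"
  proof (rule upper_lin)
    fix q assume q: "q \<in> {k+1..N}"
    then have M: "int (if q \<le> k then m - 1 else m) = int m" by auto
    have "int m * (int m - 1) - (int m - c q) * (int m - c q - 1) + 0 * c q
        \<le> int m * (int m - 1) + 0 * int m - lam * int m + K0 + lam * c q"
      by (rule up_group) (use h0 in simp)
    then show "PH q + 0 * c q \<le> al0 + lam * c q" unfolding PH_def M al0_def by (simp add: algebra_simps)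
  qed
  have c1: "int (card {1..k3}) = int k3" and c2: "int (card {k3+1..k}) = int k - int k3"
    and c3: "int (card {k+1..N}) = int N - int k" using kk by auto
  have e1: "(\<Sum>q\<in>{1..k3}. PH q + c q) = (\<Sum>q\<in>{1..k3}. PH q) + (\<Sum>q\<in>{1..k3}. c q)"
    by (rule sum.distrib)
  have e2: "(\<Sum>q\<in>{k3+1..k}. PH q + 2 * c q) = (\<Sum>q\<in>{k3+1..k}. PH q) + (\<Sum>q\<in>{k3+1..k}. 2 * c q)"
    by (rule sum.distrib)
  have e3: "(\<Sum>q\<in>{k+1..N}. PH q + 0 * c q) = (\<Sum>q\<in>{k+1..N}. PH q)" by simp
  have lsum: "lam * t = lam * (\<Sum>q\<in>{1..k3}. c q) + lam * (\<Sum>q\<in>{k3+1..k}. c q) + lam * (\<Sum>q\<in>{k+1..N}. c q)"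
    unfolding cs[symmetric] s2[of c] by (simp add: distrib_left)
  have "(\<Sum>q\<in>{1..N}. PH q) + (\<Sum>q\<in>{1..k3}. c q) + (\<Sum>q\<in>{k3+1..k}. 2 * c q)
     \<le> int k3 * al1 + (int k - int k3) * al2 + (int N - int k) * al0 + lam * t"
    using U1 U2 U3 lsum s2[of PH] unfolding e1 e2 e3 c1 c2 c3 by linarith
  then show ?thesis unfolding PH_def al1_def al2_def al0_def .
qed

lemma lower_claim:
  assumes adm: "admissible_partition N m k n s" and kk: "k1 \<le> k" "k3 \<le> k" "k \<le> N" "k - k1 \<le> k3"
    and nz: "Poly_Mapping.lookup (vandermonde_sq n g * P_poly N m k k1 k3 n s) \<nu> \<noteq> 0"
    and sorted: "\<forall>i j. 1 \<le> i \<longrightarrow> i \<le> j \<longrightarrow> j \<le> n \<longrightarrow> Poly_Mapping.lookup \<nu> i \<le> Poly_Mapping.lookup \<nu> j"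
    and i: "1 \<le> i" "i \<le> n"
    and comb: "\<And>c::nat \<Rightarrow> int. (\<And>q. c q \<ge> 0) \<Longrightarrow> (\<Sum>q\<in>{1..N}. c q) = int i \<Longrightarrow>
        int i * (B - 1) < (\<Sum>q\<in>{1..N}. c q * (c q - 1)) + (\<Sum>q\<in>{k-k1+1..k3}. c q) + (\<Sum>q\<in>{k3+1..k}. c q)"
  shows "int (Poly_Mapping.lookup \<nu> i) \<ge> B + (int i - 1) * int g"
proof -
  let ?S = "{1..i}"
  have P: "lowM ?S (int i * (B - 1) + 1) (P_poly N m k k1 k3 n s)"
  proof (rule lowM_P_poly[OF adm kk])
    fix \<sigma> assume \<sigma>: "\<sigma> permutes {1..n}"
    let ?c = "\<lambda>q. cnt \<sigma> ?S (s q)"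
    have sum: "(\<Sum>q\<in>{1..N}. ?c q) = int i" using cnt_sum[OF adm \<sigma>, of ?S] i by simp
    have "int i * (B - 1) < (\<Sum>q\<in>{1..N}. ?c q * (?c q - 1)) + (\<Sum>q\<in>{k-k1+1..k3}. ?c q) + (\<Sum>q\<in>{k3+1..k}. ?c q)"
      by (rule comb[OF cnt_nonneg sum])
    then show "lowP 0 ?S (int i * (B - 1) + 1) (pg N k k1 k3 s (\<lambda>i. mvar (\<sigma> i)))"
      by (intro lowP_mono[OF low_pg[OF adm kk(4) kk(2) kk(3)]]) auto
  qed
  have "lowM ?S (int g * int i * (int i - 1) + (int i * (B - 1) + 1)) (vandermonde_sq n g * P_poly N m k k1 k3 n s)"
    by (rule lowM_mult[OF lowV[OF i(2)] P])
  moreover have "\<nu> \<in> Poly_Mapping.keys (vandermonde_sq n g * P_poly N m k k1 k3 n s)"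
    using nz by (simp add: in_keys_iff)
  moreover have "int g * int i * (int i - 1) + (int i * (B - 1) + 1) > int i * (B + (int i - 1) * int g - 1)"
    by (simp add: algebra_simps)
  ultimately show ?thesis using lower_final[OF _ _ sorted i] by blast
qed

lemma upper_claim:
  assumes adm: "admissible_partition N m k n s" and kk: "k1 \<le> k" "k3 \<le> k" "k \<le> N" "k - k1 \<le> k3"
    and nz: "Poly_Mapping.lookup (vandermonde_sq n g * P_poly N m k k1 k3 n s) \<nu> \<noteq> 0"
    and sorted: "\<forall>i j. 1 \<le> i \<longrightarrow> i \<le> j \<longrightarrow> j \<le> n \<longrightarrow> Poly_Mapping.lookup \<nu> i \<le> Poly_Mapping.lookup \<nu> j"
    and i: "1 \<le> i" "i \<le> n"
    and comb: "\<And>c::nat \<Rightarrow> int. (\<And>q. c q \<ge> 0) \<Longrightarrow> (\<Sum>q\<in>{1..N}. c q) = int n - int i + 1 \<Longrightarrow>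
        (\<Sum>q\<in>{1..N}. int (if q \<le> k then m - 1 else m) * (int (if q \<le> k then m - 1 else m) - 1)
          - (int (if q \<le> k then m - 1 else m) - c q) * (int (if q \<le> k then m - 1 else m) - c q - 1))
        + (\<Sum>q\<in>{1..k3}. c q) + (\<Sum>q\<in>{k3+1..k}. 2 * c q) \<le> (int n - int i + 1) * (B + 1) - 1"
  shows "int (Poly_Mapping.lookup \<nu> i) \<le> B + (int n + int i - 2) * int g"
proof -
  let ?T = "{i..n}" and ?t = "int n - int i + 1"
  have cA: "int (card (\<Union>q\<in>{1..k-k1}. s q)) + int (card (\<Union>q\<in>{k-k1+1..k3}. s q)) \<le> int ((m - 1) * k3)"
  proof -
    have "card (\<Union>q\<in>{1..k-k1}. s q) \<le> (k - k1 + 1 - 1) * (m - 1)"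
      using card_UN_groups[of N m k n s "k-k1" 1] adm kk by auto
    moreover have "card (\<Union>q\<in>{k-k1+1..k3}. s q) \<le> (k3 + 1 - (k - k1 + 1)) * (m - 1)"
      using card_UN_groups[of N m k n s k3 "k-k1+1"] adm kk by auto
    moreover have "(k - k1 + 1 - 1) * (m - 1) + (k3 + 1 - (k - k1 + 1)) * (m - 1) = (m - 1) * k3"
    proof -
      have "k - k1 + 1 - 1 + (k3 + 1 - (k - k1 + 1)) = k3" using kk(4) by simp
      then show ?thesis by (metis add_mult_distrib mult.commute)
    qed
    ultimately show ?thesis by linarith
  qed
  have P: "highM ?T (?t * (B + 1) - 1) (P_poly N m k k1 k3 n s)"
  proof (rule highM_P_poly[OF adm kk])
    fix \<sigma> assume \<sigma>: "\<sigma> permutes {1..n}"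
    let ?c = "\<lambda>q. cnt \<sigma> ?T (s q)"
    have sum: "(\<Sum>q\<in>{1..N}. ?c q) = ?t" using cnt_sum[OF adm \<sigma>, of ?T] i by simp
    have cards: "(\<Sum>q\<in>{1..N}. int (card (s q)) * (int (card (s q)) - 1)
          - (int (card (s q)) - ?c q) * (int (card (s q)) - ?c q - 1))
      = (\<Sum>q\<in>{1..N}. int (if q \<le> k then m - 1 else m) * (int (if q \<le> k then m - 1 else m) - 1)
          - (int (if q \<le> k then m - 1 else m) - ?c q) * (int (if q \<le> k then m - 1 else m) - ?c q - 1))"
      by (rule sum.cong[OF refl]) (use adm_card[OF adm] in simp)
    have split: "(\<Sum>q\<in>{1..k-k1}. ?c q) + (\<Sum>q\<in>{k-k1+1..k3}. ?c q) = (\<Sum>q\<in>{1..k3}. ?c q)"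
      using sum_split_ivl1[of "k-k1" k3 ?c] kk by simp
    have C: "(\<Sum>q\<in>{1..N}. int (if q \<le> k then m - 1 else m) * (int (if q \<le> k then m - 1 else m) - 1)
          - (int (if q \<le> k then m - 1 else m) - ?c q) * (int (if q \<le> k then m - 1 else m) - ?c q - 1))
        + (\<Sum>q\<in>{1..k3}. ?c q) + (\<Sum>q\<in>{k3+1..k}. 2 * ?c q) \<le> ?t * (B + 1) - 1"
      by (rule comb[OF cnt_nonneg sum])
    have H: "highP 1 ?T ((\<Sum>q\<in>{1..N}. int (card (s q)) * (int (card (s q)) - 1)
          - (int (card (s q)) - ?c q) * (int (card (s q)) - ?c q - 1))
     + ((\<Sum>q\<in>{1..k-k1}. ?c q) + int (card (\<Union>q\<in>{1..k-k1}. s q)))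
     + ((\<Sum>q\<in>{k-k1+1..k3}. ?c q) + int (card (\<Union>q\<in>{k-k1+1..k3}. s q)))
     + (\<Sum>q\<in>{k3+1..k}. 2 * ?c q)) (pg N k k1 k3 s (\<lambda>i. mvar (\<sigma> i)))"
      by (rule high_pg[OF adm kk(4) kk(2) kk(3)]) simp
    show "highP 1 ?T (?t * (B + 1) - 1 + int ((m - 1) * k3)) (pg N k k1 k3 s (\<lambda>i. mvar (\<sigma> i)))"
      by (rule highP_mono[OF H]) (use C cA split cards in linarith)
  qed
  have "highM ?T (int g * (int n - int i + 1) * (int n + int i - 2) + (?t * (B + 1) - 1)) (vandermonde_sq n g * P_poly N m k k1 k3 n s)"
    by (rule highM_mult[OF highV[OF i] P])
  moreover have "\<nu> \<in> Poly_Mapping.keys (vandermonde_sq n g * P_poly N m k k1 k3 n s)"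
    using nz by (simp add: in_keys_iff)
  moreover have "int g * (int n - int i + 1) * (int n + int i - 2) + (?t * (B + 1) - 1) < ?t * (B + (int n + int i - 2) * int g + 1)"
    by (simp add: algebra_simps)
  ultimately show ?thesis using upper_final[OF _ _ sorted i] by blast
qed

theorem proposition2:
  fixes N m k k1 k2 k3 n g :: nat and s :: "nat \<Rightarrow> nat set" and \<nu> :: "nat \<Rightarrow>\<^sub>0 nat"
  assumes "N \<ge> 1" and "m \<ge> 1"
    and "k1 + k2 + k3 = 2 * k" and "k1 \<le> k" and "k2 \<le> k" and "k3 \<le> k" and "k \<le> N"
    and "n = m * N - k"
    and "admissible_partition N m k n s"
    and sorted: "\<forall>i j. 1 \<le> i \<longrightarrow> i \<le> j \<longrightarrow> j \<le> n \<longrightarrow> Poly_Mapping.lookup \<nu> i \<le> Poly_Mapping.lookup \<nu> j"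
    and "Poly_Mapping.lookup (vandermonde_sq n g * P_poly N m k k1 k3 n s) \<nu> \<noteq> 0"
  shows
    "(\<forall>p j. p + 2 \<le> m \<longrightarrow> 1 \<le> j \<longrightarrow> j \<le> N - k1 \<longrightarrow>
        int (Poly_Mapping.lookup \<nu> (p * N + j)) \<ge> int p + (int (p * N + j) - 1) * int g) \<and>
     (\<forall>p j. p + 2 \<le> m \<longrightarrow> N - k1 + 1 \<le> j \<longrightarrow> j \<le> N \<longrightarrow>
        int (Poly_Mapping.lookup \<nu> (p * N + j)) \<ge> int p + 1 + (int (p * N + j) - 1) * int g) \<and>
     (\<forall>j. 1 \<le> j \<longrightarrow> j \<le> N - k \<longrightarrow>
        int (Poly_Mapping.lookup \<nu> (N * (m - 1) + j)) \<ge> int m - 1 + (int ((m - 1) * N + j) - 1) * int g) \<and>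
     (\<forall>p j. p + 1 \<le> m \<longrightarrow> 1 \<le> j \<longrightarrow> j \<le> N - k \<longrightarrow>
        int (Poly_Mapping.lookup \<nu> (p * N + j)) \<le> int m + int p - 1 + (int ((m + p) * N) - int k + int j - 2) * int g) \<and>
     (\<forall>p j. p + 2 \<le> m \<longrightarrow> N - k + 1 \<le> j \<longrightarrow> j \<le> N - k + k3 \<longrightarrow>
        int (Poly_Mapping.lookup \<nu> (p * N + j)) \<le> int m + int p - 1 + (int ((m + p) * N) - int k + int j - 2) * int g) \<and>
     (\<forall>p j. p + 2 \<le> m \<longrightarrow> N - k + k3 + 1 \<le> j \<longrightarrow> j \<le> N \<longrightarrow>
        int (Poly_Mapping.lookup \<nu> (p * N + j)) \<le> int m + int p + (int ((m + p) * N) - int k + int j - 2) * int g)"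
proof -
  note adm = assms(9) and nz = assms(11)
  have kk: "k1 \<le> k" "k3 \<le> k" "k \<le> N" "k - k1 \<le> k3" using assms(3-7) by auto
  have kmN: "k \<le> m * N" using assms(2,7) by (metis le_trans mult_1 mult_le_mono1)
  have nint: "int n = int m * int N - int k" using assms(8) kmN by (simp add: of_nat_diff)
  have bnd: "p * N + j \<le> n" if "p + 1 \<le> m" "j + k \<le> N" for p j
  proof -
    have "p * N + j \<le> p * N + (N - k)" using that by simp
    also have "p * N + N \<le> m * N" using that mult_le_mono1[of "p + 1" m N] by simp
    then have "p * N + (N - k) \<le> m * N - k" using kk by linarith
    finally show ?thesis using assms(8) by simp
  qed
  have bnd2: "p * N + j \<le> n" if "p + 2 \<le> m" "j \<le> N" for p j
  proof -
    have "p * N + j \<le> p * N + N" using that by simp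
    also have "p * N + N + N \<le> m * N" using that mult_le_mono1[of "p + 2" m N] by simp
    then have "p * N + N \<le> m * N - k" using kk by linarith
    finally show ?thesis using assms(8) by simp
  qed
  show ?thesis
  proof (intro conjI allI impI)
    fix p j assume h: "p + 2 \<le> m" "1 \<le> j" "j \<le> N - k1"
    have i: "1 \<le> p * N + j" "p * N + j \<le> n" using h bnd2[of p j] kk by auto
    show "int (Poly_Mapping.lookup \<nu> (p * N + j)) \<ge> int p + (int (p * N + j) - 1) * int g"
    proof (rule lower_claim[OF adm kk nz sorted i])
      fix c :: "nat \<Rightarrow> int" assume "\<And>q. c q \<ge> 0" "(\<Sum>q\<in>{1..N}. c q) = int (p * N + j)"
      then show "int (p * N + j) * (int p - 1) < (\<Sum>q\<in>{1..N}. c q * (c q - 1)) + (\<Sum>q\<in>{k-k1+1..k3}. c q) + (\<Sum>q\<in>{k3+1..k}. c q)"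
        by (rule combA) (use h in auto)
    qed
  next
    fix p j assume h: "p + 2 \<le> m" "N - k1 + 1 \<le> j" "j \<le> N"
    have i: "1 \<le> p * N + j" "p * N + j \<le> n" using h bnd2[of p j] kk by auto
    show "int (Poly_Mapping.lookup \<nu> (p * N + j)) \<ge> int p + 1 + (int (p * N + j) - 1) * int g"
    proof (rule lower_claim[OF adm kk nz sorted i])
      fix c :: "nat \<Rightarrow> int" assume "\<And>q. c q \<ge> 0" "(\<Sum>q\<in>{1..N}. c q) = int (p * N + j)"
      then show "int (p * N + j) * (int p + 1 - 1) < (\<Sum>q\<in>{1..N}. c q * (c q - 1)) + (\<Sum>q\<in>{k-k1+1..k3}. c q) + (\<Sum>q\<in>{k3+1..k}. c q)"
        by (rule combB) (use h kk in auto)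
    qed
  next
    fix j assume h: "1 \<le> j" "j \<le> N - k"
    have i: "1 \<le> (m - 1) * N + j" "(m - 1) * N + j \<le> n" using h bnd[of "m - 1" j] kk assms(2) by auto
    have "int (Poly_Mapping.lookup \<nu> ((m - 1) * N + j)) \<ge> (int m - 1) + (int ((m - 1) * N + j) - 1) * int g"
    proof (rule lower_claim[OF adm kk nz sorted i])
      fix c :: "nat \<Rightarrow> int" assume "\<And>q. c q \<ge> 0" "(\<Sum>q\<in>{1..N}. c q) = int ((m - 1) * N + j)"
      then show "int ((m - 1) * N + j) * (int m - 1 - 1) < (\<Sum>q\<in>{1..N}. c q * (c q - 1)) + (\<Sum>q\<in>{k-k1+1..k3}. c q) + (\<Sum>q\<in>{k3+1..k}. c q)"
        by (rule combA) (use h assms(2) in \<open>auto simp: of_nat_diff\<close>)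
    qed
    then show "int (Poly_Mapping.lookup \<nu> (N * (m - 1) + j)) \<ge> int m - 1 + (int ((m - 1) * N + j) - 1) * int g"
      by (simp add: mult.commute)
  next
    fix p j assume h: "p + 1 \<le> m" "1 \<le> j" "j \<le> N - k"
    have i: "1 \<le> p * N + j" "p * N + j \<le> n" using h bnd[of p j] kk by auto
    have eq: "int n + int (p * N + j) - 2 = int ((m + p) * N) - int k + int j - 2"
      using nint by (simp add: algebra_simps)
    have "int (Poly_Mapping.lookup \<nu> (p * N + j)) \<le> (int m + int p - 1) + (int n + int (p * N + j) - 2) * int g"
    proof (rule upper_claim[OF adm kk nz sorted i])
      fix c :: "nat \<Rightarrow> int" assume c0: "\<And>q. c q \<ge> 0" and cs: "(\<Sum>q\<in>{1..N}. c q) = int n - int (p * N + j) + 1"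
      have h0: "d * d - (2 * int p + 1) * d \<ge> - (int p * (int p + 1))" for d by (rule sq_bound_odd)
      have h1: "d * d - 2 * int p * d \<ge> - (int p * int p)" for d by (rule sq_bound_even)
      have h2: "d * d - (2 * int p - 1) * d \<ge> - ((int p - 1) * int p)" for d
        using sq_bound_odd[where d=d and a="int p - 1"] by (simp add: algebra_simps)
      have A: "(\<Sum>q\<in>{1..N}. int (if q \<le> k then m - 1 else m) * (int (if q \<le> k then m - 1 else m) - 1)
          - (int (if q \<le> k then m - 1 else m) - c q) * (int (if q \<le> k then m - 1 else m) - c q - 1))
        + (\<Sum>q\<in>{1..k3}. c q) + (\<Sum>q\<in>{k3+1..k}. 2 * c q)
        \<le> int k3 * ((int m - 1) * (int m - 2) + (int m - 1) - 2 * int p * (int m - 1) + int p * int p)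
      + (int k - int k3) * ((int m - 1) * (int m - 2) + 2 * (int m - 1) - 2 * int p * (int m - 1) + (int p - 1) * int p)
      + (int N - int k) * (int m * (int m - 1) - 2 * int p * int m + int p * (int p + 1)) + 2 * int p * (int n - int (p * N + j) + 1)"
        by (rule combU[OF h0 h1 h2 kk(2) kk(3) assms(2) cs])
      have B: "int k3 * ((int m - 1) * (int m - 2) + (int m - 1) - 2 * int p * (int m - 1) + int p * int p)
      + (int k - int k3) * ((int m - 1) * (int m - 2) + 2 * (int m - 1) - 2 * int p * (int m - 1) + (int p - 1) * int p)
      + (int N - int k) * (int m * (int m - 1) - 2 * int p * int m + int p * (int p + 1)) + 2 * int p * (int n - int (p * N + j) + 1)
        \<le> (int n - int (p * N + j) + 1) * (int m + int p - 1 + 1) - 1"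
        by (rule arith4) (use h kk nint in auto)
      from A B show "(\<Sum>q\<in>{1..N}. int (if q \<le> k then m - 1 else m) * (int (if q \<le> k then m - 1 else m) - 1)
          - (int (if q \<le> k then m - 1 else m) - c q) * (int (if q \<le> k then m - 1 else m) - c q - 1))
        + (\<Sum>q\<in>{1..k3}. c q) + (\<Sum>q\<in>{k3+1..k}. 2 * c q) \<le> (int n - int (p * N + j) + 1) * (int m + int p - 1 + 1) - 1"
        by (rule order.trans)
    qed
    then show "int (Poly_Mapping.lookup \<nu> (p * N + j)) \<le> int m + int p - 1 + (int ((m + p) * N) - int k + int j - 2) * int g"
      unfolding eq .
  next
    fix p j assume h: "p + 2 \<le> m" "N - k + 1 \<le> j" "j \<le> N - k + k3"
    have i: "1 \<le> p * N + j" "p * N + j \<le> n" using h bnd2[of p j] kk by auto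
    have eq: "int n + int (p * N + j) - 2 = int ((m + p) * N) - int k + int j - 2"
      using nint by (simp add: algebra_simps)
    have "int (Poly_Mapping.lookup \<nu> (p * N + j)) \<le> (int m + int p - 1) + (int n + int (p * N + j) - 2) * int g"
    proof (rule upper_claim[OF adm kk nz sorted i])
      fix c :: "nat \<Rightarrow> int" assume c0: "\<And>q. c q \<ge> 0" and cs: "(\<Sum>q\<in>{1..N}. c q) = int n - int (p * N + j) + 1"
      have h0: "d * d - (2 * int p + 1 + 1) * d \<ge> - ((int p + 1) * (int p + 1))" for d
        using sq_bound_even[where d=d and a="int p + 1"] by (simp add: algebra_simps)
      have h1: "d * d - (2 * int p + 1) * d \<ge> - (int p * (int p + 1))" for d by (rule sq_bound_odd)
      have h2: "d * d - (2 * int p + 1 - 1) * d \<ge> - (int p * int p)" for d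
        using sq_bound_even[where d=d and a="int p"] by (simp add: algebra_simps)
      have A: "(\<Sum>q\<in>{1..N}. int (if q \<le> k then m - 1 else m) * (int (if q \<le> k then m - 1 else m) - 1)
          - (int (if q \<le> k then m - 1 else m) - c q) * (int (if q \<le> k then m - 1 else m) - c q - 1))
        + (\<Sum>q\<in>{1..k3}. c q) + (\<Sum>q\<in>{k3+1..k}. 2 * c q)
        \<le> int k3 * ((int m - 1) * (int m - 2) + (int m - 1) - (2 * int p + 1) * (int m - 1) + int p * (int p + 1))
      + (int k - int k3) * ((int m - 1) * (int m - 2) + 2 * (int m - 1) - (2 * int p + 1) * (int m - 1) + int p * int p)
      + (int N - int k) * (int m * (int m - 1) - (2 * int p + 1) * int m + (int p + 1) * (int p + 1)) + (2 * int p + 1) * (int n - int (p * N + j) + 1)"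
        by (rule combU[OF h0 h1 h2 kk(2) kk(3) assms(2) cs])
      have B: "int k3 * ((int m - 1) * (int m - 2) + (int m - 1) - (2 * int p + 1) * (int m - 1) + int p * (int p + 1))
      + (int k - int k3) * ((int m - 1) * (int m - 2) + 2 * (int m - 1) - (2 * int p + 1) * (int m - 1) + int p * int p)
      + (int N - int k) * (int m * (int m - 1) - (2 * int p + 1) * int m + (int p + 1) * (int p + 1)) + (2 * int p + 1) * (int n - int (p * N + j) + 1)
        \<le> (int n - int (p * N + j) + 1) * (int m + int p - 1 + 1) - 1"
        by (rule arith5) (use h kk nint in auto)
      from A B show "(\<Sum>q\<in>{1..N}. int (if q \<le> k then m - 1 else m) * (int (if q \<le> k then m - 1 else m) - 1)
          - (int (if q \<le> k then m - 1 else m) - c q) * (int (if q \<le> k then m - 1 else m) - c q - 1))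
        + (\<Sum>q\<in>{1..k3}. c q) + (\<Sum>q\<in>{k3+1..k}. 2 * c q) \<le> (int n - int (p * N + j) + 1) * (int m + int p - 1 + 1) - 1"
        by (rule order.trans)
    qed
    then show "int (Poly_Mapping.lookup \<nu> (p * N + j)) \<le> int m + int p - 1 + (int ((m + p) * N) - int k + int j - 2) * int g"
      unfolding eq .
  next
    fix p j assume h: "p + 2 \<le> m" "N - k + k3 + 1 \<le> j" "j \<le> N"
    have i: "1 \<le> p * N + j" "p * N + j \<le> n" using h bnd2[of p j] kk by auto
    have eq: "int n + int (p * N + j) - 2 = int ((m + p) * N) - int k + int j - 2"
      using nint by (simp add: algebra_simps)
    have "int (Poly_Mapping.lookup \<nu> (p * N + j)) \<le> (int m + int p) + (int n + int (p * N + j) - 2) * int g"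
    proof (rule upper_claim[OF adm kk nz sorted i])
      fix c :: "nat \<Rightarrow> int" assume c0: "\<And>q. c q \<ge> 0" and cs: "(\<Sum>q\<in>{1..N}. c q) = int n - int (p * N + j) + 1"
      have h0: "d * d - (2 * int p + 2 + 1) * d \<ge> - ((int p + 1) * (int p + 2))" for d
        using sq_bound_odd[where d=d and a="int p + 1"] by (simp add: algebra_simps)
      have h1: "d * d - (2 * int p + 2) * d \<ge> - ((int p + 1) * (int p + 1))" for d
        using sq_bound_even[where d=d and a="int p + 1"] by (simp add: algebra_simps)
      have h2: "d * d - (2 * int p + 2 - 1) * d \<ge> - (int p * (int p + 1))" for d
        using sq_bound_odd[where d=d and a="int p"] by (simp add: algebra_simps)
      have A: "(\<Sum>q\<in>{1..N}. int (if q \<le> k then m - 1 else m) * (int (if q \<le> k then m - 1 else m) - 1)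
          - (int (if q \<le> k then m - 1 else m) - c q) * (int (if q \<le> k then m - 1 else m) - c q - 1))
        + (\<Sum>q\<in>{1..k3}. c q) + (\<Sum>q\<in>{k3+1..k}. 2 * c q)
        \<le> int k3 * ((int m - 1) * (int m - 2) + (int m - 1) - (2 * int p + 2) * (int m - 1) + (int p + 1) * (int p + 1))
      + (int k - int k3) * ((int m - 1) * (int m - 2) + 2 * (int m - 1) - (2 * int p + 2) * (int m - 1) + int p * (int p + 1))
      + (int N - int k) * (int m * (int m - 1) - (2 * int p + 2) * int m + (int p + 1) * (int p + 2)) + (2 * int p + 2) * (int n - int (p * N + j) + 1)"
        by (rule combU[OF h0 h1 h2 kk(2) kk(3) assms(2) cs])
      have B: "int k3 * ((int m - 1) * (int m - 2) + (int m - 1) - (2 * int p + 2) * (int m - 1) + (int p + 1) * (int p + 1))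
      + (int k - int k3) * ((int m - 1) * (int m - 2) + 2 * (int m - 1) - (2 * int p + 2) * (int m - 1) + int p * (int p + 1))
      + (int N - int k) * (int m * (int m - 1) - (2 * int p + 2) * int m + (int p + 1) * (int p + 2)) + (2 * int p + 2) * (int n - int (p * N + j) + 1)
        \<le> (int n - int (p * N + j) + 1) * (int m + int p + 1) - 1"
        by (rule arith6) (use h kk nint in auto)
      from A B show "(\<Sum>q\<in>{1..N}. int (if q \<le> k then m - 1 else m) * (int (if q \<le> k then m - 1 else m) - 1)
          - (int (if q \<le> k then m - 1 else m) - c q) * (int (if q \<le> k then m - 1 else m) - c q - 1))
        + (\<Sum>q\<in>{1..k3}. c q) + (\<Sum>q\<in>{k3+1..k}. 2 * c q) \<le> (int n - int (p * N + j) + 1) * (int m + int p + 1) - 1"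
        by (rule order.trans)
    qed
    then show "int (Poly_Mapping.lookup \<nu> (p * N + j)) \<le> int m + int p + (int ((m + p) * N) - int k + int j - 2) * int g"
      unfolding eq .
  qed
qed

end
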